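(* Let $C,D,E$ be category presentations and $P:C\nrightarrow D$, $Q:D\nrightarrow E$ curried profunctor presentations. There is an isomorphism of profunctors $\mu^{P,Q}:[\![P]\!]\odot[\![Q]\!]\to[\![P\circledast Q]\!]$ in $\mathbf{Prof}([\![C]\!],[\![E]\!])$, given on components by $\langle[s],[t]\rangle\mapsto[s\otimes t]$ for terms $s:d$ of $P(c)$ and $t:e$ of $Q(d)$, which is natural in $P\in\mathbf{Curr}(C,D)$ and $Q\in\mathbf{Curr}(D,E)$. Furthermore, if $P$ and $Q$ are finite then $P\circledast Q$ is finite. In particular, if $\mathcal P:[\![C]\!]\nrightarrow[\![D]\!]$ and $\mathcal Q:[\![D]\!]\nrightarrow[\![E]\!]$ are finitely curried presentable, then so is $\mathcal P\odot\mathcal Q$.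
   Context: Category presentations $C$: sorts, function symbols $f:c\to c'$, equations $C_E$ between parallel paths (paths: composable lists $f_1.\cdots.f_n$ or empty $1_c$); finite if all these sets are finite. $\approx_C$: smallest equivalence relation on paths containing $C_E$ closed under concatenation with composable function symbols. $[\![C]\!]$: objects the sorts, morphisms $\approx_C$-classes $[p]$. Profunctors: $\mathcal P:\mathcal C\nrightarrow\mathcal D$ is a functor $\mathcal C^{op}\times\mathcal D\to\mathbf{Set}$ (equivalently a category over $\mathbf 2=\{0\to1\}$ with fibres $\mathcal C,\mathcal D$); $\mathbf{Prof}(\mathcal C,\mathcal D)$ has natural transformations as morphisms. Composition: $(\mathcal P\odot\mathcal Q)(c,e)$ is $\coprod_{d}\mathcal P(c,d)\times\mathcal Q(d,e)$ modulo the equivalence relation generated by $(p,\mathcal Q(g,1)(q'))\sim(\mathcal P(1,g)(p),q')$ for $g:d\to d'$ in $\mathcal D$, $p\in\mathcal P(c,d)$, $q'\in\mathcal Q(d',e)$; the class of $(p,q)$ is $\langle p,q\rangle$; $(\mathcal P\odot\mathcal Q)(f,h)\langle p,q\rangle=\langle\mathcal P(f,1)p,\mathcal Q(1,h)q\rangle$. Instance presentations: a $D$-instance presentation $I$ has generators $x:d$ and equations $I_E$ between terms $x.g$ ($g$ a $D$-path); finite if generators and equations are finite. $\approx_I$: smallest equivalence relation on terms containing $I_E$, closed under right concatenation with $D$-function symbols, identifying $t.p$ and $t.q$ for every equation $p=q$ of $D_E$. $[\![I]\!]:[\![D]\!]\to\mathbf{Set}$ sends $d$ to $\approx_I$-classes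 of terms of type $d$, $[g]$ acting by $[t]\mapsto[t.g]$. A morphism $F:I\to J$ sends generators $x:d$ to terms $F(x):d$ with $F(x).g\approx_J F(y).h$ for every equation $x.g=y.h$ in $I_E$; $F(x.g):=F(x).g$; $F\approx G$ iff $F(x)\approx_J G(x)$ for all $x$. Curried presentations: $P:C\nrightarrow D$ assigns a $D$-instance presentation $P(c)$ to each sort $c$ and a $D$-instance morphism $P(f):P(c')\to P(c)$ to each function symbol $f:c\to c'$, with $P(p)\approx P(p')$ for each equation $p=p'$ of $C_E$, where $P(f_1.\cdots.f_n):=P(f_n)\circ\cdots\circ P(f_1)$. Finite if $C,D$ and all $P(c)$ are finite. Morphisms $F:P\to P'$: families of $D$-instance morphisms $F_c:P(c)\to P'(c)$ with $F_c\circ P(f)\approx P'(f)\circ F_{c'}$ for each function symbol $f:c\to c'$; category $\mathbf{Curr}(C,D)$. Semantics: $[\![P]\!](c,d)=[\![P(c)]\!](d)$, with $[f]$ acting by $[t]\mapsto[P(f)(t)]$ and $[g]$ by $[t]\mapsto[t.g]$; on morphisms $[\![F]\!]_{(c,d)}[t]=[F_c(t)]$. A profunctor is finitely curried presentable if it is isomorphic to $[\![P]\!]$ for a finite curried $P$. Composite: for $P:C\nrightarrow D$, $Q:D\nrightarrow E$ and sort $c$, $(P\circledast Q)(c)$ is the $E$-instance presentation with generators $p\otimes q:e$ ($p:d$ generator of $P(c)$, $q:e$ generator of $Q(d)$); $\otimes$ extends to terms by $p\otimes(q.h):=(p\otimes q).h$ and $(p.g)\otimes t:=p\otimes Q(g)(t)$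 ($p:d'$, $g:d'\to d$); equations: $s\otimes q=s'\otimes q$ for each equation $s=s':d$ of $P(c)$ and generator $q:e$ of $Q(d)$, and $p\otimes t=p\otimes t'$ for each generator $p:d$ of $P(c)$ and equation $t=t'$ of $Q(d)$. $(P\circledast Q)(f)(p\otimes q):=P(f)(p)\otimes q$. On morphisms, $(\phi\circledast\psi)_c(p\otimes q):=\phi_c(p)\otimes\psi_d(q)$. *)

theory Defs
  imports Main
begin

record ('o,'m) cat =
  c_obj :: "'o set"
  c_mor :: "'m set"
  c_dom :: "'m \<Rightarrow> 'o"
  c_cod :: "'m \<Rightarrow> 'o"
  c_id  :: "'o \<Rightarrow> 'm"
  c_comp :: "'m \<Rightarrow> 'm \<Rightarrow> 'm"   (* c_comp g f = g \<circ> f, f applied first *)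

text \<open>A profunctor P : A -/-> B is a functor A^op x B -> Set.  A morphism (f,g) of
  A^op x B goes from (cod f, dom g) to (dom f, cod g).\<close>
record ('o1,'m1,'o2,'m2,'v) prof =
  pobj :: "'o1 \<Rightarrow> 'o2 \<Rightarrow> 'v set"
  pmor :: "'m1 \<Rightarrow> 'm2 \<Rightarrow> 'v \<Rightarrow> 'v"

definition is_prof :: "('o1,'m1) cat \<Rightarrow> ('o2,'m2) cat \<Rightarrow> ('o1,'m1,'o2,'m2,'v) prof \<Rightarrow> bool" where
  "is_prof A B P \<longleftrightarrow>
     (\<forall>f\<in>c_mor A. \<forall>g\<in>c_mor B. \<forall>x\<in>pobj P (c_cod A f) (c_dom B g).
        pmor P f g x \<in> pobj P (c_dom A f) (c_cod B g)) \<and>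
     (\<forall>a\<in>c_obj A. \<forall>b\<in>c_obj B. \<forall>x\<in>pobj P a b. pmor P (c_id A a) (c_id B b) x = x) \<and>
     (\<forall>f\<in>c_mor A. \<forall>f'\<in>c_mor A. \<forall>g\<in>c_mor B. \<forall>g'\<in>c_mor B.
        c_cod A f' = c_dom A f \<longrightarrow> c_cod B g = c_dom B g' \<longrightarrow>
        (\<forall>x\<in>pobj P (c_cod A f) (c_dom B g).
           pmor P (c_comp A f f') (c_comp B g' g) x = pmor P f' g' (pmor P f g x)))"

definition is_nt :: "('o1,'m1) cat \<Rightarrow> ('o2,'m2) cat \<Rightarrow> ('o1,'m1,'o2,'m2,'v) prof
    \<Rightarrow> ('o1,'m1,'o2,'m2,'w) prof \<Rightarrow> ('o1 \<Rightarrow> 'o2 \<Rightarrow> 'v \<Rightarrow> 'w) \<Rightarrow> bool" where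
  "is_nt A B P P' \<alpha> \<longleftrightarrow>
     (\<forall>a\<in>c_obj A. \<forall>b\<in>c_obj B. \<forall>x\<in>pobj P a b. \<alpha> a b x \<in> pobj P' a b) \<and>
     (\<forall>f\<in>c_mor A. \<forall>g\<in>c_mor B. \<forall>x\<in>pobj P (c_cod A f) (c_dom B g).
        \<alpha> (c_dom A f) (c_cod B g) (pmor P f g x) = pmor P' f g (\<alpha> (c_cod A f) (c_dom B g) x))"

definition is_prof_iso :: "('o1,'m1) cat \<Rightarrow> ('o2,'m2) cat \<Rightarrow> ('o1,'m1,'o2,'m2,'v) prof
    \<Rightarrow> ('o1,'m1,'o2,'m2,'w) prof \<Rightarrow> ('o1 \<Rightarrow> 'o2 \<Rightarrow> 'v \<Rightarrow> 'w) \<Rightarrow> bool" where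
  "is_prof_iso A B P P' \<alpha> \<longleftrightarrow> is_nt A B P P' \<alpha> \<and>
     (\<exists>\<beta>. is_nt A B P' P \<beta> \<and>
        (\<forall>a\<in>c_obj A. \<forall>b\<in>c_obj B.
           (\<forall>x\<in>pobj P a b. \<beta> a b (\<alpha> a b x) = x) \<and> (\<forall>y\<in>pobj P' a b. \<alpha> a b (\<beta> a b y) = y)))"

definition prof_isomorphic :: "('o1,'m1) cat \<Rightarrow> ('o2,'m2) cat \<Rightarrow> ('o1,'m1,'o2,'m2,'v) prof
    \<Rightarrow> ('o1,'m1,'o2,'m2,'w) prof \<Rightarrow> bool" where
  "prof_isomorphic A B P P' \<longleftrightarrow> (\<exists>\<alpha>. is_prof_iso A B P P' \<alpha>)"

definition coend_carrier :: "('o2,'m2) cat \<Rightarrow> ('o1,'m1,'o2,'m2,'v) prof \<Rightarrow> ('o2,'m2,'o3,'m3,'w) prof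
    \<Rightarrow> 'o1 \<Rightarrow> 'o3 \<Rightarrow> ('o2 \<times> 'v \<times> 'w) set" where
  "coend_carrier B P Q a c = {(b,p,q). b \<in> c_obj B \<and> p \<in> pobj P a b \<and> q \<in> pobj Q b c}"

text \<open>Generating relation: (p, Q(g,1) q') ~ (P(1,g) p, q') for g : b -> b'.\<close>
definition coend_gen :: "('o1,'m1) cat \<Rightarrow> ('o2,'m2) cat \<Rightarrow> ('o3,'m3) cat
    \<Rightarrow> ('o1,'m1,'o2,'m2,'v) prof \<Rightarrow> ('o2,'m2,'o3,'m3,'w) prof
    \<Rightarrow> 'o1 \<Rightarrow> 'o3 \<Rightarrow> 'o2 \<times> 'v \<times> 'w \<Rightarrow> 'o2 \<times> 'v \<times> 'w \<Rightarrow> bool" where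
  "coend_gen A B C P Q a c u v \<longleftrightarrow>
     (\<exists>g\<in>c_mor B. \<exists>p\<in>pobj P a (c_dom B g). \<exists>q\<in>pobj Q (c_cod B g) c.
        u = (c_dom B g, p, pmor Q g (c_id C c) q) \<and>
        v = (c_cod B g, pmor P (c_id A a) g p, q))"

definition coend_class :: "('o1,'m1) cat \<Rightarrow> ('o2,'m2) cat \<Rightarrow> ('o3,'m3) cat
    \<Rightarrow> ('o1,'m1,'o2,'m2,'v) prof \<Rightarrow> ('o2,'m2,'o3,'m3,'w) prof
    \<Rightarrow> 'o1 \<Rightarrow> 'o3 \<Rightarrow> 'o2 \<times> 'v \<times> 'w \<Rightarrow> ('o2 \<times> 'v \<times> 'w) set" where
  "coend_class A B C P Q a c u =
     {v \<in> coend_carrier B P Q a c. equivclp (coend_gen A B C P Q a c) u v}"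

definition rep :: "'a set \<Rightarrow> 'a" where
  "rep X = (SOME x. x \<in> X)"

definition prof_comp :: "('o1,'m1) cat \<Rightarrow> ('o2,'m2) cat \<Rightarrow> ('o3,'m3) cat
    \<Rightarrow> ('o1,'m1,'o2,'m2,'v) prof \<Rightarrow> ('o2,'m2,'o3,'m3,'w) prof
    \<Rightarrow> ('o1,'m1,'o3,'m3,('o2 \<times> 'v \<times> 'w) set) prof" where
  "prof_comp A B C P Q =
     \<lparr> pobj = (\<lambda>a c. coend_class A B C P Q a c ` coend_carrier B P Q a c),
       pmor = (\<lambda>f h X. (case rep X of (b,p,q) \<Rightarrow>
                 coend_class A B C P Q (c_dom A f) (c_cod C h)
                   (b, pmor P f (c_id B b) p, pmor Q (c_id B b) h q))) \<rparr>"

definition prof_comp_nt :: "('o1,'m1) cat \<Rightarrow> ('o2,'m2) cat \<Rightarrow> ('o3,'m3) cat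
    \<Rightarrow> ('o1,'m1,'o2,'m2,'v') prof \<Rightarrow> ('o2,'m2,'o3,'m3,'w') prof
    \<Rightarrow> ('o1 \<Rightarrow> 'o2 \<Rightarrow> 'v \<Rightarrow> 'v') \<Rightarrow> ('o2 \<Rightarrow> 'o3 \<Rightarrow> 'w \<Rightarrow> 'w')
    \<Rightarrow> 'o1 \<Rightarrow> 'o3 \<Rightarrow> ('o2 \<times> 'v \<times> 'w) set \<Rightarrow> ('o2 \<times> 'v' \<times> 'w') set" where
  "prof_comp_nt A B C P' Q' \<alpha> \<beta> a c X =
     (case rep X of (b,p,q) \<Rightarrow> coend_class A B C P' Q' a c (b, \<alpha> a b p, \<beta> b c q))"

record ('s,'f) catpres =
  sorts :: "'s set"
  syms  :: "'f set"
  sdom  :: "'f \<Rightarrow> 's"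
  scod  :: "'f \<Rightarrow> 's"
  ceqs  :: "(('s \<times> 'f list) \<times> ('s \<times> 'f list)) set"

text \<open>A path is (c, [f1,...,fn]) with source c, composed diagrammatically f1.f2...fn;
  (c, []) is the empty path 1_c.\<close>
fun path_ok :: "('s,'f) catpres \<Rightarrow> 's \<Rightarrow> 'f list \<Rightarrow> bool" where
  "path_ok C c [] = True"
| "path_ok C c (f # fs) = (f \<in> syms C \<and> sdom C f = c \<and> path_ok C (scod C f) fs)"

definition valid_path :: "('s,'f) catpres \<Rightarrow> 's \<times> 'f list \<Rightarrow> bool" where
  "valid_path C p \<longleftrightarrow> fst p \<in> sorts C \<and> path_ok C (fst p) (snd p)"

definition ptgt :: "('s,'f) catpres \<Rightarrow> 's \<times> 'f list \<Rightarrow> 's" where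
  "ptgt C p = (if snd p = [] then fst p else scod C (last (snd p)))"

definition wf_catpres :: "('s,'f) catpres \<Rightarrow> bool" where
  "wf_catpres C \<longleftrightarrow> (\<forall>f\<in>syms C. sdom C f \<in> sorts C \<and> scod C f \<in> sorts C) \<and>
     (\<forall>(p,q)\<in>ceqs C. valid_path C p \<and> valid_path C q \<and> fst p = fst q \<and> ptgt C p = ptgt C q)"

definition finite_catpres :: "('s,'f) catpres \<Rightarrow> bool" where
  "finite_catpres C \<longleftrightarrow> finite (sorts C) \<and> finite (syms C) \<and> finite (ceqs C)"

inductive peq :: "('s,'f) catpres \<Rightarrow> 's \<times> 'f list \<Rightarrow> 's \<times> 'f list \<Rightarrow> bool" for C where
  peq_eq: "(p,q) \<in> ceqs C \<Longrightarrow> peq C p q"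
| peq_refl: "valid_path C p \<Longrightarrow> peq C p p"
| peq_sym: "peq C p q \<Longrightarrow> peq C q p"
| peq_trans: "peq C p q \<Longrightarrow> peq C q r \<Longrightarrow> peq C p r"
| peq_right: "peq C p q \<Longrightarrow> f \<in> syms C \<Longrightarrow> sdom C f = ptgt C p \<Longrightarrow>
     peq C (fst p, snd p @ [f]) (fst q, snd q @ [f])"
| peq_left: "peq C p q \<Longrightarrow> f \<in> syms C \<Longrightarrow> scod C f = fst p \<Longrightarrow>
     peq C (sdom C f, f # snd p) (sdom C f, f # snd q)"

definition pclass :: "('s,'f) catpres \<Rightarrow> 's \<times> 'f list \<Rightarrow> ('s \<times> 'f list) set" where
  "pclass C p = {q. peq C p q}"

definition sem_cat :: "('s,'f) catpres \<Rightarrow> ('s, ('s \<times> 'f list) set) cat" where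
  "sem_cat C = \<lparr> c_obj = sorts C,
     c_mor = {pclass C p | p. valid_path C p},
     c_dom = (\<lambda>X. fst (rep X)),
     c_cod = (\<lambda>X. ptgt C (rep X)),
     c_id = (\<lambda>c. pclass C (c, [])),
     c_comp = (\<lambda>Y X. pclass C (fst (rep X), snd (rep X) @ snd (rep Y))) \<rparr>"

record ('x,'s,'f) inspres =
  gens  :: "'x set"
  gsort :: "'x \<Rightarrow> 's"
  ieqs  :: "(('x \<times> 'f list) \<times> ('x \<times> 'f list)) set"

text \<open>A term x.g is the pair (x, g) with g a D-path starting at the sort of x.\<close>
definition valid_term :: "('s,'f) catpres \<Rightarrow> ('x,'s,'f) inspres \<Rightarrow> 'x \<times> 'f list \<Rightarrow> bool" where
  "valid_term D I t \<longleftrightarrow> fst t \<in> gens I \<and> valid_path D (gsort I (fst t), snd t)"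

definition ttype :: "('s,'f) catpres \<Rightarrow> ('x,'s,'f) inspres \<Rightarrow> 'x \<times> 'f list \<Rightarrow> 's" where
  "ttype D I t = ptgt D (gsort I (fst t), snd t)"

definition wf_inspres :: "('s,'f) catpres \<Rightarrow> ('x,'s,'f) inspres \<Rightarrow> bool" where
  "wf_inspres D I \<longleftrightarrow> (\<forall>x\<in>gens I. gsort I x \<in> sorts D) \<and>
     (\<forall>(s,t)\<in>ieqs I. valid_term D I s \<and> valid_term D I t \<and> ttype D I s = ttype D I t)"

definition finite_inspres :: "('x,'s,'f) inspres \<Rightarrow> bool" where
  "finite_inspres I \<longleftrightarrow> finite (gens I) \<and> finite (ieqs I)"

inductive teq :: "('s,'f) catpres \<Rightarrow> ('x,'s,'f) inspres \<Rightarrow> 'x \<times> 'f list \<Rightarrow> 'x \<times> 'f list \<Rightarrow> bool"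
  for D I where
  teq_eq: "(s,t) \<in> ieqs I \<Longrightarrow> teq D I s t"
| teq_refl: "valid_term D I t \<Longrightarrow> teq D I t t"
| teq_sym: "teq D I s t \<Longrightarrow> teq D I t s"
| teq_trans: "teq D I s t \<Longrightarrow> teq D I t u \<Longrightarrow> teq D I s u"
| teq_right: "teq D I s t \<Longrightarrow> f \<in> syms D \<Longrightarrow> sdom D f = ttype D I s \<Longrightarrow>
     teq D I (fst s, snd s @ [f]) (fst t, snd t @ [f])"
| teq_ceq: "valid_term D I t \<Longrightarrow> (p,q) \<in> ceqs D \<Longrightarrow> fst p = ttype D I t \<Longrightarrow>
     teq D I (fst t, snd t @ snd p) (fst t, snd t @ snd q)"

definition tclass :: "('s,'f) catpres \<Rightarrow> ('x,'s,'f) inspres \<Rightarrow> 'x \<times> 'f list \<Rightarrow> ('x \<times> 'f list) set" where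
  "tclass D I t = {u. teq D I t u}"

definition tapp :: "('x \<Rightarrow> 'y \<times> 'f list) \<Rightarrow> 'x \<times> 'f list \<Rightarrow> 'y \<times> 'f list" where
  "tapp F t = (fst (F (fst t)), snd (F (fst t)) @ snd t)"

definition inst_morph :: "('s,'f) catpres \<Rightarrow> ('x,'s,'f) inspres \<Rightarrow> ('y,'s,'f) inspres
    \<Rightarrow> ('x \<Rightarrow> 'y \<times> 'f list) \<Rightarrow> bool" where
  "inst_morph D I J F \<longleftrightarrow>
     (\<forall>x\<in>gens I. valid_term D J (F x) \<and> ttype D J (F x) = gsort I x) \<and>
     (\<forall>(s,t)\<in>ieqs I. teq D J (tapp F s) (tapp F t))"

definition morph_eq :: "('s,'f) catpres \<Rightarrow> ('x,'s,'f) inspres \<Rightarrow> ('y,'s,'f) inspres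
    \<Rightarrow> ('x \<Rightarrow> 'y \<times> 'f list) \<Rightarrow> ('x \<Rightarrow> 'y \<times> 'f list) \<Rightarrow> bool" where
  "morph_eq D I J F G \<longleftrightarrow> (\<forall>x\<in>gens I. teq D J (F x) (G x))"

definition mcomp :: "('y \<Rightarrow> 'z \<times> 'f list) \<Rightarrow> ('x \<Rightarrow> 'y \<times> 'f list) \<Rightarrow> 'x \<Rightarrow> 'z \<times> 'f list" where
  "mcomp G F x = tapp G (F x)"

record ('c,'f,'x,'d,'g) curr =
  cinst :: "'c \<Rightarrow> ('x,'d,'g) inspres"
  cmor  :: "'f \<Rightarrow> 'x \<Rightarrow> 'x \<times> 'g list"

text \<open>Action of P on a C-path f1...fn : c0 -> cn, a morphism P(cn) -> P(c0), applied to a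
  term of P(cn): P(fn) is applied first, P(f1) last.\<close>
definition apply_path :: "('c,'f,'x,'d,'g) curr \<Rightarrow> 'f list \<Rightarrow> 'x \<times> 'g list \<Rightarrow> 'x \<times> 'g list" where
  "apply_path P fs t = foldr (\<lambda>f u. tapp (cmor P f) u) fs t"

definition curr_pres :: "('c,'f) catpres \<Rightarrow> ('d,'g) catpres \<Rightarrow> ('c,'f,'x,'d,'g) curr \<Rightarrow> bool" where
  "curr_pres C D P \<longleftrightarrow> wf_catpres C \<and> wf_catpres D \<and>
     (\<forall>c\<in>sorts C. wf_inspres D (cinst P c)) \<and>
     (\<forall>f\<in>syms C. inst_morph D (cinst P (scod C f)) (cinst P (sdom C f)) (cmor P f)) \<and>
     (\<forall>(p,p')\<in>ceqs C. morph_eq D (cinst P (ptgt C p)) (cinst P (fst p))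
         (\<lambda>x. apply_path P (snd p) (x, [])) (\<lambda>x. apply_path P (snd p') (x, [])))"

definition finite_curr :: "('c,'f) catpres \<Rightarrow> ('d,'g) catpres \<Rightarrow> ('c,'f,'x,'d,'g) curr \<Rightarrow> bool" where
  "finite_curr C D P \<longleftrightarrow> finite_catpres C \<and> finite_catpres D \<and>
     (\<forall>c\<in>sorts C. finite_inspres (cinst P c))"

definition curr_morph :: "('c,'f) catpres \<Rightarrow> ('d,'g) catpres \<Rightarrow> ('c,'f,'x,'d,'g) curr
    \<Rightarrow> ('c,'f,'y,'d,'g) curr \<Rightarrow> ('c \<Rightarrow> 'x \<Rightarrow> 'y \<times> 'g list) \<Rightarrow> bool" where
  "curr_morph C D P P' F \<longleftrightarrow>
     (\<forall>c\<in>sorts C. inst_morph D (cinst P c) (cinst P' c) (F c)) \<and>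
     (\<forall>f\<in>syms C. morph_eq D (cinst P (scod C f)) (cinst P' (sdom C f))
        (mcomp (F (sdom C f)) (cmor P f)) (mcomp (cmor P' f) (F (scod C f))))"

definition sem_curr :: "('c,'f) catpres \<Rightarrow> ('d,'g) catpres \<Rightarrow> ('c,'f,'x,'d,'g) curr
    \<Rightarrow> ('c, ('c \<times> 'f list) set, 'd, ('d \<times> 'g list) set, ('x \<times> 'g list) set) prof" where
  "sem_curr C D P = \<lparr>
     pobj = (\<lambda>c d. {tclass D (cinst P c) t | t. valid_term D (cinst P c) t \<and> ttype D (cinst P c) t = d}),
     pmor = (\<lambda>X Y T. (let p = rep X; q = rep Y; u = apply_path P (snd p) (rep T)
                      in tclass D (cinst P (fst p)) (fst u, snd u @ snd q))) \<rparr>"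

definition sem_curr_morph :: "('d,'g) catpres \<Rightarrow> ('c,'f,'y,'d,'g) curr \<Rightarrow> ('c \<Rightarrow> 'x \<Rightarrow> 'y \<times> 'g list)
    \<Rightarrow> 'c \<Rightarrow> 'd \<Rightarrow> ('x \<times> 'g list) set \<Rightarrow> ('y \<times> 'g list) set" where
  "sem_curr_morph D P' F c d T = tclass D (cinst P' c) (tapp (F c) (rep T))"

definition fcp :: "'x itself \<Rightarrow> ('c,'f) catpres \<Rightarrow> ('d,'g) catpres
    \<Rightarrow> ('c, ('c \<times> 'f list) set, 'd, ('d \<times> 'g list) set, 'v) prof \<Rightarrow> bool" where
  "fcp (ty :: 'x itself) C D PP \<longleftrightarrow>
     (\<exists>P :: ('c,'f,'x,'d,'g) curr. curr_pres C D P \<and> finite_curr C D P \<and>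
        prof_isomorphic (sem_cat C) (sem_cat D) PP (sem_curr C D P))"

text \<open>s \<otimes> t for s = p.g a term of P(c) of type d (p : d'), t a term of Q(d):
  s \<otimes> t = p \<otimes> Q(g)(t), and p \<otimes> (q.h) = (p \<otimes> q).h.\<close>
definition tens :: "('d,'g,'y,'e,'h) curr \<Rightarrow> 'x \<times> 'g list \<Rightarrow> 'y \<times> 'h list \<Rightarrow> ('x \<times> 'y) \<times> 'h list" where
  "tens Q s t = (let u = apply_path Q (snd s) t in ((fst s, fst u), snd u))"

definition ccomp :: "('d,'g) catpres \<Rightarrow> ('e,'h) catpres \<Rightarrow> ('c,'f,'x,'d,'g) curr
    \<Rightarrow> ('d,'g,'y,'e,'h) curr \<Rightarrow> ('c,'f,'x \<times> 'y,'e,'h) curr" where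
  "ccomp D E P Q = \<lparr>
     cinst = (\<lambda>c. \<lparr> gens = {(p,q). p \<in> gens (cinst P c) \<and> q \<in> gens (cinst Q (gsort (cinst P c) p))},
                    gsort = (\<lambda>(p,q). gsort (cinst Q (gsort (cinst P c) p)) q),
                    ieqs = {(tens Q s (q, []), tens Q s' (q, [])) | s s' q.
                               (s,s') \<in> ieqs (cinst P c) \<and> q \<in> gens (cinst Q (ttype D (cinst P c) s))}
                         \<union> {(tens Q (p, []) t, tens Q (p, []) t') | p t t'.
                               p \<in> gens (cinst P c) \<and> (t,t') \<in> ieqs (cinst Q (gsort (cinst P c) p))} \<rparr>),
     cmor = (\<lambda>f (p,q). tens Q (cmor P f p) (q, [])) \<rparr>"

definition ccomp_morph :: "('c,'f,'x,'d,'g) curr \<Rightarrow> ('d,'g,'y','e,'h) curr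
    \<Rightarrow> ('c \<Rightarrow> 'x \<Rightarrow> 'x' \<times> 'g list) \<Rightarrow> ('d \<Rightarrow> 'y \<Rightarrow> 'y' \<times> 'h list)
    \<Rightarrow> 'c \<Rightarrow> 'x \<times> 'y \<Rightarrow> ('x' \<times> 'y') \<times> 'h list" where
  "ccomp_morph P Q' \<phi> \<psi> c pq =
     (case pq of (p,q) \<Rightarrow> tens Q' (\<phi> c p) (\<psi> (gsort (cinst P c) p) q))"

definition mu :: "('d,'g) catpres \<Rightarrow> ('e,'h) catpres \<Rightarrow> ('c,'f,'x,'d,'g) curr
    \<Rightarrow> ('d,'g,'y,'e,'h) curr \<Rightarrow> 'c \<Rightarrow> 'e
    \<Rightarrow> ('d \<times> ('x \<times> 'g list) set \<times> ('y \<times> 'h list) set) set \<Rightarrow> (('x \<times> 'y) \<times> 'h list) set" where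
  "mu D E P Q c e X =
     (case rep X of (d,S,T) \<Rightarrow> tclass E (cinst (ccomp D E P Q) c) (tens Q (rep S) (rep T)))"

end

theory Submission
  imports Defs
begin


lemma ptgt_Nil[simp]: "ptgt C (c,[]) = c" by (simp add: ptgt_def)
lemma ptgt_Cons[simp]: "ptgt C (c, f#a) = ptgt C (scod C f, a)" by (simp add: ptgt_def)
lemma ptgt_append: "ptgt C (c, a@b) = ptgt C (ptgt C (c,a), b)"
  by (simp add: ptgt_def)
lemma ptgt_snoc[simp]: "ptgt C (c, a@[f]) = scod C f"
  by (simp add: ptgt_def)
lemma path_ok_append[simp]: "path_ok C c (a@b) \<longleftrightarrow> path_ok C c a \<and> path_ok C (ptgt C (c,a)) b"
  by (induction a arbitrary: c) auto
lemma ptgt_sorts: "wf_catpres C \<Longrightarrow> c \<in> sorts C \<Longrightarrow> path_ok C c a \<Longrightarrow> ptgt C (c,a) \<in> sorts C"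
  by (induction a arbitrary: c) (auto simp: wf_catpres_def)

lemma peq_valid: assumes "wf_catpres C" "peq C p q"
  shows "valid_path C p \<and> valid_path C q \<and> fst p = fst q \<and> ptgt C p = ptgt C q"
  using assms(2)
proof induction
  case (peq_eq p q) then show ?case using assms(1) by (auto simp: wf_catpres_def)
next
  case (peq_right p q f) then show ?case
    by (cases p; cases q) (auto simp: valid_path_def ptgt_append)
next
  case (peq_left p q f) then show ?case using assms(1)
    by (cases p; cases q) (auto simp: valid_path_def wf_catpres_def)
qed auto

lemma rep_in: "X \<noteq> {} \<Longrightarrow> rep X \<in> X"
  unfolding rep_def by (simp add: some_in_eq)

lemma pclass_rep: "valid_path C p \<Longrightarrow> peq C p (rep (pclass C p))"
proof -
  assume "valid_path C p"
  then have "p \<in> pclass C p" by (simp add: pclass_def peq_refl)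
  then have "rep (pclass C p) \<in> pclass C p" by (intro rep_in) auto
  then show ?thesis by (simp add: pclass_def)
qed

lemma pclass_eq: "peq C p q \<Longrightarrow> pclass C p = pclass C q"
  unfolding pclass_def by (auto intro: peq_trans peq_sym)

lemma sem_cat_simps[simp]:
  "c_obj (sem_cat C) = sorts C"
  "c_mor (sem_cat C) = {pclass C p | p. valid_path C p}"
  "c_id (sem_cat C) c = pclass C (c, [])"
  by (simp_all add: sem_cat_def)

lemma sem_cat_dom: "wf_catpres C \<Longrightarrow> valid_path C p \<Longrightarrow> c_dom (sem_cat C) (pclass C p) = fst p"
  using pclass_rep peq_valid by (fastforce simp: sem_cat_def)
lemma sem_cat_cod: "wf_catpres C \<Longrightarrow> valid_path C p \<Longrightarrow> c_cod (sem_cat C) (pclass C p) = ptgt C p"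
  using pclass_rep peq_valid by (fastforce simp: sem_cat_def)

lemma valid_path_sorts: "wf_catpres C \<Longrightarrow> valid_path C p \<Longrightarrow> fst p \<in> sorts C \<and> ptgt C p \<in> sorts C"
  using ptgt_sorts[of C "fst p" "snd p"] by (simp add: valid_path_def)

lemma ttype_append: "ttype D I (fst t, snd t @ h) = ptgt D (ttype D I t, h)"
  by (simp add: ttype_def ptgt_append)
lemma ttype_snoc[simp]: "ttype D I (x, h @ [f]) = scod D f"
  by (simp add: ttype_def)

lemma valid_append: "valid_term D I t \<Longrightarrow> path_ok D (ttype D I t) h \<Longrightarrow> valid_term D I (fst t, snd t @ h)"
  by (simp add: valid_term_def valid_path_def ttype_def)

lemma teq_valid: assumes "wf_catpres D" "wf_inspres D I" "teq D I s t"
  shows "valid_term D I s \<and> valid_term D I t \<and> ttype D I s = ttype D I t"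
  using assms(3)
proof induction
  case (teq_eq s t) then show ?case using assms(2) by (auto simp: wf_inspres_def)
next
  case (teq_right s t f) then show ?case
    by (auto simp: valid_term_def valid_path_def ttype_def ptgt_append)
next
  case (teq_ceq t p q)
  then obtain h where "(p,q) \<in> ceqs D" "fst p = ttype D I t" "valid_term D I t" by auto
  moreover obtain p1 p2 q1 q2 where "p = (p1,p2)" "q = (q1,q2)" by fastforce
  ultimately show ?case using assms(1) valid_append[of D I t "snd p"] valid_append[of D I t "snd q"]
    by (fastforce simp: wf_catpres_def valid_path_def ttype_append)
qed auto

lemma teq_append: "teq D I s t \<Longrightarrow> path_ok D (ttype D I s) h \<Longrightarrow> teq D I (fst s, snd s @ h) (fst t, snd t @ h)"
proof (induction h arbitrary: s t)
  case Nil then show ?case by simp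
next
  case (Cons f h)
  have "teq D I (fst s, snd s @ [f]) (fst t, snd t @ [f])" using Cons by (auto intro: teq_right)
  moreover have "path_ok D (ttype D I (fst s, snd s @ [f])) h" using Cons by simp
  ultimately show ?case using Cons.IH by fastforce
qed

lemma tclass_rep: "valid_term D I t \<Longrightarrow> teq D I t (rep (tclass D I t))"
proof -
  assume "valid_term D I t"
  then have "t \<in> tclass D I t" by (simp add: tclass_def teq_refl)
  then have "rep (tclass D I t) \<in> tclass D I t" by (intro rep_in) auto
  then show ?thesis by (simp add: tclass_def)
qed

lemma tclass_eq: "teq D I s t \<Longrightarrow> tclass D I s = tclass D I t"
  unfolding tclass_def by (auto intro: teq_trans teq_sym)

lemma tclass_eqD: "valid_term D I t \<Longrightarrow> tclass D I s = tclass D I t \<Longrightarrow> teq D I s t"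
  unfolding tclass_def using teq_refl by blast

lemma teq_peq: assumes "wf_catpres D" "peq D p q"
  shows "valid_term D I t \<Longrightarrow> fst p = ttype D I t \<Longrightarrow> teq D I (fst t, snd t @ snd p) (fst t, snd t @ snd q)"
  using assms(2)
proof (induction arbitrary: t)
  case (peq_eq p q) then show ?case by (auto intro: teq_ceq)
next
  case (peq_refl p) then show ?case
    by (auto intro!: teq_refl valid_append simp: valid_path_def)
next
  case (peq_sym p q) then show ?case using peq_valid[OF assms(1) peq_sym(1)] by (auto intro: teq_sym)
next
  case (peq_trans p q r)
  have "teq D I (fst t, snd t @ snd p) (fst t, snd t @ snd q)" using peq_trans by auto
  moreover have "teq D I (fst t, snd t @ snd q) (fst t, snd t @ snd r)" using peq_trans peq_valid[OF assms(1) peq_trans(1)] by auto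
  ultimately show ?case by (rule teq_trans)
next
  case (peq_right p q f)
  have "teq D I (fst t, snd t @ snd p) (fst t, snd t @ snd q)" using peq_right by auto
  moreover have "sdom D f = ttype D I (fst t, snd t @ snd p)"
    using peq_right by (simp add: ttype_append) (simp add: ttype_def ptgt_def)
  ultimately have "teq D I (fst t, (snd t @ snd p) @ [f]) (fst t, (snd t @ snd q) @ [f])"
    using teq_right[of D I _ _ f] peq_right by fastforce
  then show ?case by simp
next
  case (peq_left p q f)
  let ?t = "(fst t, snd t @ [f])"
  have "valid_term D I ?t" using peq_left by (auto intro!: valid_append)
  moreover have "fst p = ttype D I ?t" using peq_left by simp
  ultimately have "teq D I (fst ?t, snd ?t @ snd p) (fst ?t, snd ?t @ snd q)" using peq_left.IH by blast
  then show ?case by simp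
qed



lemma tapp_tapp: "tapp G (tapp F t) = tapp (mcomp G F) t"
  by (simp add: tapp_def mcomp_def)
lemma tapp_append: "tapp F (fst t, snd t @ h) = (fst (tapp F t), snd (tapp F t) @ h)"
  by (simp add: tapp_def)
lemma tapp_gen: "tapp F (x, h) = (fst (F x), snd (F x) @ h)"
  by (simp add: tapp_def)

lemma inst_morph_valid:
  assumes "inst_morph D I J F" "valid_term D I t"
  shows "valid_term D J (tapp F t) \<and> ttype D J (tapp F t) = ttype D I t"
proof -
  have F: "valid_term D J (F (fst t))" "ttype D J (F (fst t)) = gsort I (fst t)"
    using assms by (auto simp: inst_morph_def valid_term_def)
  have "tapp F t = (fst (F (fst t)), snd (F (fst t)) @ snd t)" by (simp add: tapp_def)
  moreover have "path_ok D (ttype D J (F (fst t))) (snd t)" using F assms(2)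
    by (simp add: valid_term_def valid_path_def)
  ultimately show ?thesis using valid_append[OF F(1)] F
    by (simp add: ttype_append) (simp add: ttype_def)
qed

lemma inst_morph_teq:
  assumes wfD: "wf_catpres D" and wfI: "wf_inspres D I" and F: "inst_morph D I J F"
    and "teq D I s t"
  shows "teq D J (tapp F s) (tapp F t)"
  using assms(4)
proof induction
  case (teq_eq s t) then show ?case using F by (auto simp: inst_morph_def)
next
  case (teq_refl t) show ?case by (rule teq.teq_refl) (use inst_morph_valid[OF F teq_refl] in blast)
next
  case (teq_sym s t) then show ?case by (auto intro: teq.teq_sym)
next
  case (teq_trans s t u) then show ?case by (auto intro: teq.teq_trans)
next
  case (teq_right s t f)
  have vs: "valid_term D I s" using teq_valid[OF wfD wfI teq_right(1)] by auto
  have "teq D J (fst (tapp F s), snd (tapp F s) @ [f]) (fst (tapp F t), snd (tapp F t) @ [f])"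
    using teq_right inst_morph_valid[OF F vs] by (auto intro: teq.teq_right)
  then show ?case by (simp add: tapp_def)
next
  case (teq_ceq t p q)
  have "teq D J (fst (tapp F t), snd (tapp F t) @ snd p) (fst (tapp F t), snd (tapp F t) @ snd q)"
    using teq_ceq inst_morph_valid[OF F teq_ceq(1)] by (auto intro: teq.teq_ceq)
  then show ?case by (simp add: tapp_def)
qed

lemma morph_eq_teq:
  assumes "morph_eq D I J F G" "inst_morph D I J F" "valid_term D I t"
  shows "teq D J (tapp F t) (tapp G t)"
proof -
  have "teq D J (F (fst t)) (G (fst t))" using assms by (auto simp: morph_eq_def valid_term_def)
  moreover have "path_ok D (ttype D J (F (fst t))) (snd t)" using assms
    by (auto simp: inst_morph_def valid_term_def valid_path_def)
  ultimately show ?thesis using teq_append by (fastforce simp: tapp_def)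
qed

lemma apply_path_Nil[simp]: "apply_path P [] t = t" by (simp add: apply_path_def)
lemma apply_path_Cons[simp]: "apply_path P (f#g) t = tapp (cmor P f) (apply_path P g t)"
  by (simp add: apply_path_def)
lemma apply_path_app: "apply_path P (a@b) t = apply_path P a (apply_path P b t)"
  by (simp add: apply_path_def)
lemma apply_path_append: "apply_path P g (fst t, snd t @ h) = (fst (apply_path P g t), snd (apply_path P g t) @ h)"
  by (induction g) (auto simp: tapp_def)
lemma apply_path_gen: "apply_path P g (x, h) = (fst (apply_path P g (x,[])), snd (apply_path P g (x,[])) @ h)"
  using apply_path_append[of P g "(x,[])" h] by simp

lemma apply_path_valid:
  assumes "curr_pres C D P" "c \<in> sorts C" "path_ok C c g" "valid_term D (cinst P (ptgt C (c,g))) t"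
  shows "valid_term D (cinst P c) (apply_path P g t) \<and> ttype D (cinst P c) (apply_path P g t) = ttype D (cinst P (ptgt C (c,g))) t"
  using assms(2-4)
proof (induction g arbitrary: c)
  case Nil then show ?case by simp
next
  case (Cons f g)
  have "scod C f \<in> sorts C" using Cons assms(1) by (auto simp: curr_pres_def wf_catpres_def)
  then have IH: "valid_term D (cinst P (scod C f)) (apply_path P g t) \<and> ttype D (cinst P (scod C f)) (apply_path P g t) = ttype D (cinst P (ptgt C (c,f#g))) t"
    using Cons by auto
  have "inst_morph D (cinst P (scod C f)) (cinst P c) (cmor P f)"
    using assms(1) Cons by (auto simp: curr_pres_def)
  then show ?case using inst_morph_valid IH by fastforce
qed

lemma apply_path_teq:
  assumes "curr_pres C D P" "c \<in> sorts C" "path_ok C c g" "teq D (cinst P (ptgt C (c,g))) t t'"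
  shows "teq D (cinst P c) (apply_path P g t) (apply_path P g t')"
  using assms(2-4)
proof (induction g arbitrary: c)
  case Nil then show ?case by simp
next
  case (Cons f g)
  have sf: "scod C f \<in> sorts C" using Cons assms(1) by (auto simp: curr_pres_def wf_catpres_def)
  then have IH: "teq D (cinst P (scod C f)) (apply_path P g t) (apply_path P g t')"
    using Cons by auto
  have "inst_morph D (cinst P (scod C f)) (cinst P c) (cmor P f)"
    using assms(1) Cons by (auto simp: curr_pres_def)
  moreover have "wf_catpres D" "wf_inspres D (cinst P (scod C f))" using assms(1) sf by (auto simp: curr_pres_def)
  ultimately show ?case using inst_morph_teq IH by fastforce
qed

lemma apply_path_peq:
  assumes cp: "curr_pres C D P" and "peq C p q"
  shows "valid_term D (cinst P (ptgt C p)) t \<Longrightarrow> teq D (cinst P (fst p)) (apply_path P (snd p) t) (apply_path P (snd q) t)"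
  using assms(2)
proof (induction arbitrary: t)
  have wfC: "wf_catpres C" and wfD: "wf_catpres D" using cp by (auto simp: curr_pres_def)
  {
  case (peq_eq p q)
  obtain x h where t: "t = (x,h)" by fastforce
  obtain p1 p2 q1 q2 where pq: "p = (p1,p2)" "q = (q1,q2)" by fastforce
  have vp: "valid_path C p" "valid_path C q" "fst p = fst q" "ptgt C p = ptgt C q"
    using peq_eq wfC by (auto simp: wf_catpres_def)
  have "morph_eq D (cinst P (ptgt C p)) (cinst P (fst p)) (\<lambda>x. apply_path P (snd p) (x, [])) (\<lambda>x. apply_path P (snd q) (x, []))"
    using cp peq_eq by (auto simp: curr_pres_def)
  moreover have "x \<in> gens (cinst P (ptgt C p))" using peq_eq t by (simp add: valid_term_def)
  ultimately have e: "teq D (cinst P (fst p)) (apply_path P (snd p) (x, [])) (apply_path P (snd q) (x, []))"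
    by (simp add: morph_eq_def)
  have "valid_term D (cinst P (ptgt C p)) (x,[])" using peq_eq t by (simp add: valid_term_def valid_path_def)
  then have "ttype D (cinst P (fst p)) (apply_path P (snd p) (x, [])) = gsort (cinst P (ptgt C p)) x"
    using apply_path_valid[OF cp, of "fst p" "snd p" "(x,[])"] vp pq
    by (simp add: valid_path_def) (simp add: ttype_def)
  moreover have "path_ok D (gsort (cinst P (ptgt C p)) x) h" using peq_eq t by (simp add: valid_term_def valid_path_def)
  ultimately have "teq D (cinst P (fst p)) (fst (apply_path P (snd p) (x, [])), snd (apply_path P (snd p) (x, [])) @ h)
     (fst (apply_path P (snd q) (x, [])), snd (apply_path P (snd q) (x, [])) @ h)"
    using teq_append[OF e] by simp
  then show ?case using t apply_path_gen by metis
next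
  case (peq_refl p)
  then show ?case using apply_path_valid[OF cp, of "fst p" "snd p" t]
    by (auto intro!: teq_refl simp: valid_path_def)
next
  case (peq_sym p q)
  then show ?case using peq_valid[OF wfC peq_sym(1)] by (metis teq_sym surjective_pairing)
next
  case (peq_trans p q r)
  then show ?case using peq_valid[OF wfC peq_trans(1)] peq_valid[OF wfC peq_trans(2)]
    by (metis teq_trans)
next
  case (peq_right p q f)
  have pv: "valid_path C p" using peq_valid[OF wfC peq_right(1)] by auto
  have "sdom C f \<in> sorts C" using wfC peq_right by (auto simp: wf_catpres_def)
  then have "valid_term D (cinst P (ptgt C p)) (tapp (cmor P f) t)"
    using peq_right cp inst_morph_valid[of D "cinst P (scod C f)" "cinst P (sdom C f)" "cmor P f" t]
    by (auto simp: curr_pres_def)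
  then have "teq D (cinst P (fst p)) (apply_path P (snd p) (tapp (cmor P f) t)) (apply_path P (snd q) (tapp (cmor P f) t))"
    using peq_right by auto
  then show ?case by (simp add: apply_path_app)
next
  case (peq_left p q f)
  have sf: "sdom C f \<in> sorts C" "scod C f \<in> sorts C" using wfC peq_left by (auto simp: wf_catpres_def)
  have e: "teq D (cinst P (fst p)) (apply_path P (snd p) t) (apply_path P (snd q) t)"
    using peq_left by (cases p) auto
  have "inst_morph D (cinst P (scod C f)) (cinst P (sdom C f)) (cmor P f)" "wf_inspres D (cinst P (scod C f))"
    using cp sf peq_left by (auto simp: curr_pres_def)
  then have "teq D (cinst P (sdom C f)) (tapp (cmor P f) (apply_path P (snd p) t)) (tapp (cmor P f) (apply_path P (snd q) t))"
    using inst_morph_teq[OF wfD] e peq_left by metis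
  then show ?case by simp
  }
qed



lemma sem_mor_E: "X \<in> c_mor (sem_cat C) \<Longrightarrow> (\<And>p. valid_path C p \<Longrightarrow> X = pclass C p \<Longrightarrow> thesis) \<Longrightarrow> thesis"
  by auto

lemma pobj_sem: "pobj (sem_curr C D P) c d = {tclass D (cinst P c) t | t. valid_term D (cinst P c) t \<and> ttype D (cinst P c) t = d}"
  by (simp add: sem_curr_def)

lemma pmor_sem_raw: "pmor (sem_curr C D P) X Y T = (let p = rep X; q = rep Y; u = apply_path P (snd p) (rep T)
                      in tclass D (cinst P (fst p)) (fst u, snd u @ snd q))"
  by (simp add: sem_curr_def)

lemma curr_wf:
  assumes "curr_pres C D P"
  shows "wf_catpres C" "wf_catpres D" "c \<in> sorts C \<Longrightarrow> wf_inspres D (cinst P c)"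
  using assms by (auto simp: curr_pres_def)

lemma pmor_sem:
  assumes cp: "curr_pres C D P" and vp: "valid_path C p" and vq: "valid_path D q"
    and vt: "valid_term D (cinst P (ptgt C p)) t" and ty: "ttype D (cinst P (ptgt C p)) t = fst q"
  shows "pmor (sem_curr C D P) (pclass C p) (pclass D q) (tclass D (cinst P (ptgt C p)) t)
     = tclass D (cinst P (fst p)) (fst (apply_path P (snd p) t), snd (apply_path P (snd p) t) @ snd q)"
    and "valid_term D (cinst P (fst p)) (fst (apply_path P (snd p) t), snd (apply_path P (snd p) t) @ snd q)"
    and "ttype D (cinst P (fst p)) (fst (apply_path P (snd p) t), snd (apply_path P (snd p) t) @ snd q) = ptgt D q"
proof -
  note wf = curr_wf[OF cp]
  define p' where "p' = rep (pclass C p)"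
  define q' where "q' = rep (pclass D q)"
  define t' where "t' = rep (tclass D (cinst P (ptgt C p)) t)"
  have pp: "peq C p p'" using pclass_rep[OF vp] p'_def by simp
  have qq: "peq D q q'" using pclass_rep[OF vq] q'_def by simp
  have tt: "teq D (cinst P (ptgt C p)) t t'" using tclass_rep[OF vt] t'_def by simp
  have pv: "valid_path C p'" "fst p' = fst p" "ptgt C p' = ptgt C p" using peq_valid[OF wf(1) pp] by auto
  have qv: "valid_path D q'" "fst q' = fst q" "ptgt D q' = ptgt D q" using peq_valid[OF wf(2) qq] by auto
  have sp: "fst p \<in> sorts C" "ptgt C p \<in> sorts C" using valid_path_sorts[OF wf(1) vp] by auto
  have u1: "teq D (cinst P (fst p)) (apply_path P (snd p') t') (apply_path P (snd p') t)"
    using apply_path_teq[OF cp, of "fst p" "snd p'" t' t] pv sp tt teq_sym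
    by (metis prod.collapse valid_path_def)
  have u2: "teq D (cinst P (fst p)) (apply_path P (snd p') t) (apply_path P (snd p) t)"
    using apply_path_peq[OF cp peq_sym[OF pp] ] vt pv by simp
  have va: "valid_term D (cinst P (fst p)) (apply_path P (snd p) t) \<and> ttype D (cinst P (fst p)) (apply_path P (snd p) t) = fst q"
    using apply_path_valid[OF cp, of "fst p" "snd p" t] vp vt sp ty by (simp add: valid_path_def)
  have u: "teq D (cinst P (fst p)) (apply_path P (snd p') t') (apply_path P (snd p) t)"
    using u1 u2 teq_trans by blast
  have tyu: "ttype D (cinst P (fst p)) (apply_path P (snd p') t') = fst q"
    using teq_valid[OF wf(2) wf(3)[OF sp(1)] u] va by simp
  have e1: "teq D (cinst P (fst p)) (fst (apply_path P (snd p') t'), snd (apply_path P (snd p') t') @ snd q')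
           (fst (apply_path P (snd p) t), snd (apply_path P (snd p) t) @ snd q')"
    using teq_append[OF u, of "snd q'"] tyu qv by (simp add: valid_path_def)
  have e2: "teq D (cinst P (fst p)) (fst (apply_path P (snd p) t), snd (apply_path P (snd p) t) @ snd q')
           (fst (apply_path P (snd p) t), snd (apply_path P (snd p) t) @ snd q)"
    using teq_peq[OF wf(2) peq_sym[OF qq], of "cinst P (fst p)" "apply_path P (snd p) t"] va qv by simp
  show "pmor (sem_curr C D P) (pclass C p) (pclass D q) (tclass D (cinst P (ptgt C p)) t)
     = tclass D (cinst P (fst p)) (fst (apply_path P (snd p) t), snd (apply_path P (snd p) t) @ snd q)"
    unfolding pmor_sem_raw Let_def p'_def[symmetric] q'_def[symmetric] t'_def[symmetric] pv(2)
    by (rule tclass_eq) (rule teq_trans[OF e1 e2])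
  show "valid_term D (cinst P (fst p)) (fst (apply_path P (snd p) t), snd (apply_path P (snd p) t) @ snd q)"
    using valid_append[of D "cinst P (fst p)" "apply_path P (snd p) t" "snd q"] va vq
    by (simp add: valid_path_def)
  show "ttype D (cinst P (fst p)) (fst (apply_path P (snd p) t), snd (apply_path P (snd p) t) @ snd q) = ptgt D q"
    using va ttype_append[of D "cinst P (fst p)" "apply_path P (snd p) t" "snd q"]
    by (metis prod.collapse)
qed



lemma ccomp_gens: "gens (cinst (ccomp D E P Q) c) = {(p,q). p \<in> gens (cinst P c) \<and> q \<in> gens (cinst Q (gsort (cinst P c) p))}"
  by (simp add: ccomp_def)
lemma ccomp_gsort[simp]: "gsort (cinst (ccomp D E P Q) c) (p,q) = gsort (cinst Q (gsort (cinst P c) p)) q"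
  by (simp add: ccomp_def)
lemma ccomp_ieqs: "ieqs (cinst (ccomp D E P Q) c) =
   {(tens Q s (q, []), tens Q s' (q, [])) | s s' q.
       (s,s') \<in> ieqs (cinst P c) \<and> q \<in> gens (cinst Q (ttype D (cinst P c) s))}
   \<union> {(tens Q (p, []) t, tens Q (p, []) t') | p t t'.
       p \<in> gens (cinst P c) \<and> (t,t') \<in> ieqs (cinst Q (gsort (cinst P c) p))}"
  by (simp add: ccomp_def)
lemma ccomp_cmor[simp]: "cmor (ccomp D E P Q) f (p,q) = tens Q (cmor P f p) (q, [])"
  by (simp add: ccomp_def)

lemma tens_gen: "tens Q (x,[]) u = ((x, fst u), snd u)"
  by (simp add: tens_def)
lemma tens_split: "tens Q s t = tens Q (fst s, []) (apply_path Q (snd s) t)"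
  by (simp add: tens_def Let_def)
lemma tens_app1: "tens Q (fst s, snd s @ h) t = tens Q s (apply_path Q h t)"
  by (simp add: tens_def Let_def apply_path_app)
lemma tens_app2: "tens Q s (fst t, snd t @ h) = (fst (tens Q s t), snd (tens Q s t) @ h)"
  by (simp add: tens_def Let_def apply_path_append)
lemma tens_tapp: "tens Q (tapp F s) t = tens Q (F (fst s)) (apply_path Q (snd s) t)"
  by (simp add: tens_def Let_def tapp_def apply_path_app)

lemma ccomp_tapp: "tapp (cmor (ccomp D E P Q) f) (tens Q s t) = tens Q (tapp (cmor P f) s) t"
proof -
  have "tapp (cmor (ccomp D E P Q) f) (tens Q s t) =
     (fst (tens Q (cmor P f (fst s)) (fst (apply_path Q (snd s) t), [])),
      snd (tens Q (cmor P f (fst s)) (fst (apply_path Q (snd s) t), [])) @ snd (apply_path Q (snd s) t))"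
    by (simp add: tens_def tapp_def Let_def)
  also have "\<dots> = tens Q (cmor P f (fst s)) (apply_path Q (snd s) t)"
    using tens_app2[of Q "cmor P f (fst s)" "(fst (apply_path Q (snd s) t), [])" "snd (apply_path Q (snd s) t)"]
    by simp
  also have "\<dots> = tens Q (tapp (cmor P f) s) t" by (simp add: tens_tapp)
  finally show ?thesis .
qed

lemma apply_path_ccomp: "apply_path (ccomp D E P Q) g (tens Q s t) = tens Q (apply_path P g s) t"
  by (induction g) (simp_all add: ccomp_tapp)

lemma ttype_tens: "ttype E (cinst (ccomp D E P Q) c) (tens Q s t) = ttype E (cinst Q (gsort (cinst P c) (fst s))) (apply_path Q (snd s) t)"
  by (simp add: tens_def Let_def ttype_def)

locale two =
  fixes C :: "('c,'f) catpres" and D :: "('d,'g) catpres" and E :: "('e,'h) catpres"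
    and P :: "('c,'f,'x,'d,'g) curr" and Q :: "('d,'g,'y,'e,'h) curr"
  assumes cpP: "curr_pres C D P" and cpQ: "curr_pres D E Q"
begin

abbreviation "I c \<equiv> cinst (ccomp D E P Q) c"

lemma wfC: "wf_catpres C" and wfD: "wf_catpres D" and wfE: "wf_catpres E"
  using cpP cpQ by (auto simp: curr_pres_def)
lemma wfP: "c \<in> sorts C \<Longrightarrow> wf_inspres D (cinst P c)" using cpP by (auto simp: curr_pres_def)
lemma wfQ: "d \<in> sorts D \<Longrightarrow> wf_inspres E (cinst Q d)" using cpQ by (auto simp: curr_pres_def)

lemma gsortP: "c \<in> sorts C \<Longrightarrow> x \<in> gens (cinst P c) \<Longrightarrow> gsort (cinst P c) x \<in> sorts D"
  using wfP by (auto simp: wf_inspres_def)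

lemma ttypeP: "c \<in> sorts C \<Longrightarrow> valid_term D (cinst P c) s \<Longrightarrow> ttype D (cinst P c) s \<in> sorts D"
  using wfD by (auto simp: valid_term_def ttype_def valid_path_def intro: ptgt_sorts)

lemma tens_valid:
  assumes c: "c \<in> sorts C" and vs: "valid_term D (cinst P c) s"
    and vt: "valid_term E (cinst Q (ttype D (cinst P c) s)) t"
  shows "valid_term E (I c) (tens Q s t) \<and> ttype E (I c) (tens Q s t) = ttype E (cinst Q (ttype D (cinst P c) s)) t"
proof -
  obtain x g where s: "s = (x,g)" by fastforce
  let ?d0 = "gsort (cinst P c) x"
  have x: "x \<in> gens (cinst P c)" "path_ok D ?d0 g" "?d0 \<in> sorts D" using vs s by (auto simp: valid_term_def valid_path_def)
  have pt: "ptgt D (?d0, g) = ttype D (cinst P c) s" using s by (simp add: ttype_def)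
  have u: "valid_term E (cinst Q ?d0) (apply_path Q g t) \<and> ttype E (cinst Q ?d0) (apply_path Q g t) = ttype E (cinst Q (ttype D (cinst P c) s)) t"
    using apply_path_valid[OF cpQ x(3) x(2)] vt pt by simp
  have ts: "tens Q s t = ((x, fst (apply_path Q g t)), snd (apply_path Q g t))"
    using s by (simp add: tens_def Let_def)
  show ?thesis using u x unfolding ts
    by (auto simp: valid_term_def ccomp_gens ttype_def)
qed

lemma tens_teq_gen:
  assumes c: "c \<in> sorts C" and x: "x \<in> gens (cinst P c)"
    and "teq E (cinst Q (gsort (cinst P c) x)) t t'"
  shows "teq E (I c) (tens Q (x,[]) t) (tens Q (x,[]) t')"
  using assms(3)
proof induction
  case (teq_eq t t')
  have "(tens Q (x,[]) t, tens Q (x,[]) t') \<in> ieqs (I c)" unfolding ccomp_ieqs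
    apply (rule UnI2) apply (rule CollectI) apply (rule exI[of _ x], rule exI[of _ t], rule exI[of _ t'])
    using teq_eq x by simp
  then show ?case by (rule teq.teq_eq)
next
  case (teq_refl t)
  have "valid_term D (cinst P c) (x,[])" using x gsortP[OF c x] by (simp add: valid_term_def valid_path_def)
  then show ?case using tens_valid[OF c, of "(x,[])" t] teq_refl by (auto simp: ttype_def intro: teq.teq_refl)
next
  case (teq_sym s t) then show ?case by (auto intro: teq.teq_sym)
next
  case (teq_trans s t u) then show ?case by (auto intro: teq.teq_trans)
next
  case (teq_right s t f)
  have "teq E (I c) (fst (tens Q (x,[]) s), snd (tens Q (x,[]) s) @ [f]) (fst (tens Q (x,[]) t), snd (tens Q (x,[]) t) @ [f])"
    using teq_right by (intro teq.teq_right) (auto simp: tens_gen ttype_def)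
  then show ?case by (simp add: tens_app2)
next
  case (teq_ceq t p q)
  have v: "valid_term D (cinst P c) (x,[])" using x gsortP[OF c x] by (simp add: valid_term_def valid_path_def)
  have "teq E (I c) (fst (tens Q (x,[]) t), snd (tens Q (x,[]) t) @ snd p) (fst (tens Q (x,[]) t), snd (tens Q (x,[]) t) @ snd q)"
    using teq_ceq tens_valid[OF c v, of t] by (intro teq.teq_ceq) (auto simp: tens_gen ttype_def)
  then show ?case by (simp add: tens_app2)
qed

lemma tens_teq2:
  assumes c: "c \<in> sorts C" and vs: "valid_term D (cinst P c) s"
    and tt: "teq E (cinst Q (ttype D (cinst P c) s)) t t'"
  shows "teq E (I c) (tens Q s t) (tens Q s t')"
proof -
  obtain x g where s: "s = (x,g)" by fastforce
  let ?d0 = "gsort (cinst P c) x"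
  have x: "x \<in> gens (cinst P c)" "path_ok D ?d0 g" "?d0 \<in> sorts D" using vs s by (auto simp: valid_term_def valid_path_def)
  have pt: "ptgt D (?d0, g) = ttype D (cinst P c) s" using s by (simp add: ttype_def)
  have "teq E (cinst Q ?d0) (apply_path Q g t) (apply_path Q g t')"
    using apply_path_teq[OF cpQ x(3) x(2)] tt pt by simp
  then have "teq E (I c) (tens Q (x,[]) (apply_path Q g t)) (tens Q (x,[]) (apply_path Q g t'))"
    using tens_teq_gen[OF c x(1)] by simp
  then show ?thesis using tens_split[of Q s] s by (metis fst_conv snd_conv)
qed

lemma tens_teq1:
  assumes c: "c \<in> sorts C" and ss: "teq D (cinst P c) s s'"
  shows "valid_term E (cinst Q (ttype D (cinst P c) s)) t \<Longrightarrow> teq E (I c) (tens Q s t) (tens Q s' t)"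
  using ss
proof (induction arbitrary: t)
  note wfPc = wfP[OF c]
  {
  case (teq_eq s s')
  obtain q h where t: "t = (q,h)" by fastforce
  have q: "q \<in> gens (cinst Q (ttype D (cinst P c) s))" using teq_eq t by (simp add: valid_term_def)
  have "(tens Q s (q,[]), tens Q s' (q,[])) \<in> ieqs (I c)" unfolding ccomp_ieqs
    apply (rule UnI1) apply (rule CollectI) apply (rule exI[of _ s], rule exI[of _ s'], rule exI[of _ q])
    using teq_eq q by simp
  then have e: "teq E (I c) (tens Q s (q,[])) (tens Q s' (q,[]))" by (rule teq.teq_eq)
  have vs: "valid_term D (cinst P c) s" using teq_eq wfPc by (auto simp: wf_inspres_def)
  have "valid_term E (cinst Q (ttype D (cinst P c) s)) (q,[])" using teq_eq t by (simp add: valid_term_def valid_path_def)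
  then have "ttype E (I c) (tens Q s (q,[])) = gsort (cinst Q (ttype D (cinst P c) s)) q"
    using tens_valid[OF c vs] by (simp add: ttype_def)
  moreover have "path_ok E (gsort (cinst Q (ttype D (cinst P c) s)) q) h" using teq_eq t by (simp add: valid_term_def valid_path_def)
  ultimately have "teq E (I c) (fst (tens Q s (q,[])), snd (tens Q s (q,[])) @ h) (fst (tens Q s' (q,[])), snd (tens Q s' (q,[])) @ h)"
    using teq_append[OF e] by simp
  then show ?case using t tens_app2[of Q s "(q,[])" h] tens_app2[of Q s' "(q,[])" h] by simp
next
  case (teq_refl s)
  have "valid_term E (I c) (tens Q s t)" using tens_valid[OF c teq_refl.hyps teq_refl.prems] by blast
  then show ?case by (rule teq.teq_refl)
next
  case (teq_sym s s')
  then show ?case using teq_valid[OF wfD wfPc teq_sym(1)] by (metis teq.teq_sym)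
next
  case (teq_trans s s' s'')
  then show ?case using teq_valid[OF wfD wfPc teq_trans(1)] by (metis teq.teq_trans)
next
  case (teq_right s s' f)
  have vs: "valid_term D (cinst P c) s" "ttype D (cinst P c) s = sdom D f" using teq_valid[OF wfD wfPc teq_right(1)] teq_right by auto
  have sf: "scod D f \<in> sorts D" "sdom D f \<in> sorts D" using wfD teq_right by (auto simp: wf_catpres_def)
  have "inst_morph E (cinst Q (scod D f)) (cinst Q (sdom D f)) (cmor Q f)" using cpQ teq_right by (auto simp: curr_pres_def)
  moreover have "valid_term E (cinst Q (scod D f)) t" using teq_right.prems by simp
  ultimately have "valid_term E (cinst Q (sdom D f)) (tapp (cmor Q f) t)"
    using inst_morph_valid by blast
  then have "valid_term E (cinst Q (ttype D (cinst P c) s)) (tapp (cmor Q f) t)" using vs by simp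
  then have "teq E (I c) (tens Q s (apply_path Q [f] t)) (tens Q s' (apply_path Q [f] t))" using teq_right by simp
  then show ?case using tens_app1[of Q s "[f]" t] tens_app1[of Q s' "[f]" t] by simp
next
  case (teq_ceq s p q)
  have sorts: "fst p \<in> sorts D" using teq_ceq ttypeP[OF c] by auto
  have vp: "valid_path D p" "ptgt D p = ptgt D q" "fst p = fst q" using teq_ceq wfD by (auto simp: wf_catpres_def)
  have ty: "ttype D (cinst P c) (fst s, snd s @ snd p) = ptgt D p"
    using ttype_append[of D "cinst P c" s "snd p"] teq_ceq by (metis prod.collapse)
  have a: "teq E (cinst Q (fst p)) (apply_path Q (snd p) t) (apply_path Q (snd q) t)"
    using apply_path_peq[OF cpQ peq_eq[OF teq_ceq(2)]] teq_ceq ty by simp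
  have "teq E (I c) (tens Q s (apply_path Q (snd p) t)) (tens Q s (apply_path Q (snd q) t))"
    using tens_teq2[OF c teq_ceq(1)] a teq_ceq by simp
  then show ?case using tens_app1 by metis
  }
qed

end


context two begin

lemma valid_gen: "c \<in> sorts C \<Longrightarrow> x \<in> gens (cinst P c) \<Longrightarrow> valid_term D (cinst P c) (x,[])"
  using gsortP by (simp add: valid_term_def valid_path_def)
lemma valid_genQ: "d \<in> sorts D \<Longrightarrow> q \<in> gens (cinst Q d) \<Longrightarrow> valid_term E (cinst Q d) (q,[])"
  using wfQ by (auto simp: valid_term_def valid_path_def wf_inspres_def)

lemma wf_I: assumes c: "c \<in> sorts C" shows "wf_inspres E (I c)"
  unfolding wf_inspres_def
proof (intro conjI ballI)
  fix w assume "w \<in> gens (I c)"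
  then obtain x q where w: "w = (x,q)" "x \<in> gens (cinst P c)" "q \<in> gens (cinst Q (gsort (cinst P c) x))"
    by (auto simp: ccomp_gens)
  then show "gsort (I c) w \<in> sorts E" using wfQ[OF gsortP[OF c w(2)]] by (auto simp: wf_inspres_def)
next
  fix pr assume "pr \<in> ieqs (I c)"
  then consider (a) s s' q where "pr = (tens Q s (q, []), tens Q s' (q, []))" "(s,s') \<in> ieqs (cinst P c)" "q \<in> gens (cinst Q (ttype D (cinst P c) s))"
    | (b) x t t' where "pr = (tens Q (x, []) t, tens Q (x, []) t')" "x \<in> gens (cinst P c)" "(t,t') \<in> ieqs (cinst Q (gsort (cinst P c) x))"
    unfolding ccomp_ieqs by blast
  then show "case pr of (s, t) \<Rightarrow> valid_term E (I c) s \<and> valid_term E (I c) t \<and> ttype E (I c) s = ttype E (I c) t"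
  proof cases
    case a
    have v: "valid_term D (cinst P c) s" "valid_term D (cinst P c) s'" "ttype D (cinst P c) s = ttype D (cinst P c) s'"
      using wfP[OF c] a by (auto simp: wf_inspres_def)
    have vq: "valid_term E (cinst Q (ttype D (cinst P c) s)) (q,[])" using valid_genQ ttypeP[OF c v(1)] a by blast
    show ?thesis using tens_valid[OF c v(1) vq] tens_valid[OF c v(2)] vq v(3) a by auto
  next
    case b
    have v: "valid_term D (cinst P c) (x,[])" using valid_gen[OF c b(2)] .
    have ty: "ttype D (cinst P c) (x,[]) = gsort (cinst P c) x" by (simp add: ttype_def)
    have vt: "valid_term E (cinst Q (gsort (cinst P c) x)) t" "valid_term E (cinst Q (gsort (cinst P c) x)) t'"
      "ttype E (cinst Q (gsort (cinst P c) x)) t = ttype E (cinst Q (gsort (cinst P c) x)) t'"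
      using wfQ[OF gsortP[OF c b(2)]] b by (auto simp: wf_inspres_def)
    show ?thesis using tens_valid[OF c v] vt b ty by auto
  qed
qed

lemma curr_pres_ccomp: "curr_pres C E (ccomp D E P Q)"
  unfolding curr_pres_def
proof (intro conjI ballI)
  show "wf_catpres C" "wf_catpres E" by (rule wfC, rule wfE)
  show "\<And>c. c \<in> sorts C \<Longrightarrow> wf_inspres E (I c)" by (rule wf_I)
next
  fix f assume f: "f \<in> syms C"
  have sf: "sdom C f \<in> sorts C" "scod C f \<in> sorts C" using f wfC by (auto simp: wf_catpres_def)
  have mf: "inst_morph D (cinst P (scod C f)) (cinst P (sdom C f)) (cmor P f)" using cpP f by (auto simp: curr_pres_def)
  show "inst_morph E (I (scod C f)) (I (sdom C f)) (cmor (ccomp D E P Q) f)"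
    unfolding inst_morph_def
  proof (intro conjI ballI)
    fix w assume "w \<in> gens (I (scod C f))"
    then obtain x q where w: "w = (x,q)" "x \<in> gens (cinst P (scod C f))" "q \<in> gens (cinst Q (gsort (cinst P (scod C f)) x))"
      by (auto simp: ccomp_gens)
    have vx: "valid_term D (cinst P (sdom C f)) (tapp (cmor P f) (x,[]))"
      "ttype D (cinst P (sdom C f)) (tapp (cmor P f) (x,[])) = gsort (cinst P (scod C f)) x"
      using inst_morph_valid[OF mf valid_gen[OF sf(2) w(2)]] by (auto simp: ttype_def)
    have vq: "valid_term E (cinst Q (gsort (cinst P (scod C f)) x)) (q,[])"
      using valid_genQ[OF gsortP[OF sf(2) w(2)] w(3)] .
    have eq: "cmor (ccomp D E P Q) f w = tens Q (tapp (cmor P f) (x,[])) (q,[])"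
      using w by (simp add: tapp_def)
    show "valid_term E (I (sdom C f)) (cmor (ccomp D E P Q) f w)"
      "ttype E (I (sdom C f)) (cmor (ccomp D E P Q) f w) = gsort (I (scod C f)) w"
      using tens_valid[OF sf(1) vx(1)] vx(2) vq w eq by (auto simp: ttype_def)
  next
    fix pr assume "pr \<in> ieqs (I (scod C f))"
    then consider (a) s s' q where "pr = (tens Q s (q, []), tens Q s' (q, []))" "(s,s') \<in> ieqs (cinst P (scod C f))" "q \<in> gens (cinst Q (ttype D (cinst P (scod C f)) s))"
      | (b) x t t' where "pr = (tens Q (x, []) t, tens Q (x, []) t')" "x \<in> gens (cinst P (scod C f))" "(t,t') \<in> ieqs (cinst Q (gsort (cinst P (scod C f)) x))"
      unfolding ccomp_ieqs by blast
    then show "case pr of (s, t) \<Rightarrow> teq E (I (sdom C f)) (tapp (cmor (ccomp D E P Q) f) s) (tapp (cmor (ccomp D E P Q) f) t)"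
    proof cases
      case a
      have v: "valid_term D (cinst P (scod C f)) s" using wfP[OF sf(2)] a by (auto simp: wf_inspres_def)
      have e: "teq D (cinst P (sdom C f)) (tapp (cmor P f) s) (tapp (cmor P f) s')"
        using mf a by (auto simp: inst_morph_def)
      have ty: "ttype D (cinst P (sdom C f)) (tapp (cmor P f) s) = ttype D (cinst P (scod C f)) s"
        using inst_morph_valid[OF mf v] by simp
      have vq: "valid_term E (cinst Q (ttype D (cinst P (sdom C f)) (tapp (cmor P f) s))) (q,[])"
        using valid_genQ ttypeP[OF sf(2) v] a ty by simp
      show ?thesis using tens_teq1[OF sf(1) e vq] a by (simp add: ccomp_tapp)
    next
      case b
      have v: "valid_term D (cinst P (sdom C f)) (tapp (cmor P f) (x,[]))"
        "ttype D (cinst P (sdom C f)) (tapp (cmor P f) (x,[])) = gsort (cinst P (scod C f)) x"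
        using inst_morph_valid[OF mf valid_gen[OF sf(2) b(2)]] by (auto simp: ttype_def)
      have "teq E (cinst Q (gsort (cinst P (scod C f)) x)) t t'" using b by (auto intro: teq_eq)
      then show ?thesis using tens_teq2[OF sf(1) v(1)] v(2) b by (simp add: ccomp_tapp)
    qed
  qed
next
  fix pr assume pr: "pr \<in> ceqs C"
  obtain p p' where pp: "pr = (p,p')" by (rule prod.exhaust)
  have vp: "valid_path C p" "fst p = fst p'" "ptgt C p = ptgt C p'" using wfC pr pp by (auto simp: wf_catpres_def)
  have sp: "fst p \<in> sorts C" "ptgt C p \<in> sorts C" using valid_path_sorts[OF wfC vp(1)] by auto
  have "morph_eq E (I (ptgt C p)) (I (fst p)) (\<lambda>x. apply_path (ccomp D E P Q) (snd p) (x, []))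
      (\<lambda>x. apply_path (ccomp D E P Q) (snd p') (x, []))"
    unfolding morph_eq_def
  proof
    fix w assume "w \<in> gens (I (ptgt C p))"
    then obtain x q where w: "w = (x,q)" "x \<in> gens (cinst P (ptgt C p))" "q \<in> gens (cinst Q (gsort (cinst P (ptgt C p)) x))"
      by (auto simp: ccomp_gens)
    have ww: "(w,[]) = tens Q (x,[]) (q,[])" using w by (simp add: tens_gen)
    have vx: "valid_term D (cinst P (ptgt C p)) (x,[])" using valid_gen[OF sp(2) w(2)] .
    have e: "teq D (cinst P (fst p)) (apply_path P (snd p) (x,[])) (apply_path P (snd p') (x,[]))"
      using apply_path_peq[OF cpP peq_eq[OF pr[unfolded pp]] vx] .
    have ty: "ttype D (cinst P (fst p)) (apply_path P (snd p) (x,[])) = gsort (cinst P (ptgt C p)) x"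
      using apply_path_valid[OF cpP sp(1), of "snd p" "(x,[])"] vp(1) vx by (simp add: valid_path_def ttype_def)
    have vq: "valid_term E (cinst Q (ttype D (cinst P (fst p)) (apply_path P (snd p) (x,[])))) (q,[])"
      using valid_genQ[OF gsortP[OF sp(2) w(2)] w(3)] ty by simp
    show "teq E (I (fst p)) (apply_path (ccomp D E P Q) (snd p) (w, [])) (apply_path (ccomp D E P Q) (snd p') (w, []))"
      unfolding ww apply_path_ccomp using tens_teq1[OF sp(1) e vq] .
  qed
  then show "case pr of (p, p') \<Rightarrow> morph_eq E (I (ptgt C p)) (I (fst p)) (\<lambda>x. apply_path (ccomp D E P Q) (snd p) (x, [])) (\<lambda>x. apply_path (ccomp D E P Q) (snd p') (x, []))"
    using pp by simp
qed

end


lemma cls_mem: "u \<in> coend_carrier B P Q a c \<Longrightarrow> u \<in> coend_class A B C P Q a c u"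
  by (simp add: coend_class_def)

lemma cls_eq: "equivclp (coend_gen A B C P Q a c) u v \<Longrightarrow> coend_class A B C P Q a c u = coend_class A B C P Q a c v"
proof -
  assume h: "equivclp (coend_gen A B C P Q a c) u v"
  have "equivclp (coend_gen A B C P Q a c) u w = equivclp (coend_gen A B C P Q a c) v w" for w
  proof
    assume "equivclp (coend_gen A B C P Q a c) u w"
    then show "equivclp (coend_gen A B C P Q a c) v w" by (rule equivclp_trans[OF equivclp_sym[OF h]])
  next
    assume "equivclp (coend_gen A B C P Q a c) v w"
    then show "equivclp (coend_gen A B C P Q a c) u w" by (rule equivclp_trans[OF h])
  qed
  then show ?thesis unfolding coend_class_def by simp
qed

lemma cls_eqD: "v \<in> coend_carrier B P Q a c \<Longrightarrow> coend_class A B C P Q a c u = coend_class A B C P Q a c v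
   \<Longrightarrow> equivclp (coend_gen A B C P Q a c) u v"
proof -
  assume v: "v \<in> coend_carrier B P Q a c" and e: "coend_class A B C P Q a c u = coend_class A B C P Q a c v"
  have "v \<in> coend_class A B C P Q a c u" using cls_mem[OF v] e by simp
  then show ?thesis unfolding coend_class_def using CollectD conjunct2 by fast
qed

lemma rep_cls: assumes "u \<in> coend_carrier B P Q a c"
  shows "rep (coend_class A B C P Q a c u) \<in> coend_carrier B P Q a c"
    "equivclp (coend_gen A B C P Q a c) u (rep (coend_class A B C P Q a c u))"
proof -
  have "rep (coend_class A B C P Q a c u) \<in> coend_class A B C P Q a c u"
    using cls_mem[OF assms] by (intro rep_in) auto
  then show "rep (coend_class A B C P Q a c u) \<in> coend_carrier B P Q a c"
    "equivclp (coend_gen A B C P Q a c) u (rep (coend_class A B C P Q a c u))"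
    by (auto simp: coend_class_def)
qed

lemma pobj_comp: "X \<in> pobj (prof_comp A B C P Q) a c \<longleftrightarrow> (\<exists>u\<in>coend_carrier B P Q a c. X = coend_class A B C P Q a c u)"
  by (auto simp: prof_comp_def)

lemma pobj_comp_rep: assumes "X \<in> pobj (prof_comp A B C P Q) a c"
  shows "rep X \<in> coend_carrier B P Q a c" "X = coend_class A B C P Q a c (rep X)"
proof -
  obtain u where u: "u \<in> coend_carrier B P Q a c" "X = coend_class A B C P Q a c u"
    using assms pobj_comp by metis
  then show "rep X \<in> coend_carrier B P Q a c" using rep_cls by metis
  show "X = coend_class A B C P Q a c (rep X)" using u rep_cls[OF u(1)] cls_eq by metis
qed

lemma pmor_comp: "pmor (prof_comp A B C P Q) f h X = (case rep X of (b,p,q) \<Rightarrow>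
     coend_class A B C P Q (c_dom A f) (c_cod C h) (b, pmor P f (c_id B b) p, pmor Q (c_id B b) h q))"
  by (simp add: prof_comp_def)

lemma equivclp_inv: assumes "\<And>u v. r u v \<Longrightarrow> F u = F v" and "equivclp r x y" shows "F x = F y"
  using assms(2) by induction (use assms(1) in auto)

lemma equivclp_map: assumes "\<And>u v. r u v \<Longrightarrow> equivclp r' (m u) (m v)" and "equivclp r x y"
  shows "equivclp r' (m x) (m y)"
  using assms(2)
proof induction
  case (step y z)
  have "equivclp r' (m y) (m z)"
  proof (cases "r y z")
    case True then show ?thesis by (rule assms(1))
  next
    case False then have "r z y" using step(2) by simp
    then show ?thesis by (rule equivclp_sym[OF assms(1)])
  qed
  with step(3) show ?case by (rule equivclp_trans)
qed simp

lemma carrier_mem: "(b,p,q) \<in> coend_carrier B P Q a c \<longleftrightarrow> b \<in> c_obj B \<and> p \<in> pobj P a b \<and> q \<in> pobj Q b c"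
  by (simp add: coend_carrier_def)



context two begin

abbreviation "cC \<equiv> sem_cat C"
abbreviation "cD \<equiv> sem_cat D"
abbreviation "cE \<equiv> sem_cat E"
abbreviation "SP \<equiv> sem_curr C D P"
abbreviation "SQ \<equiv> sem_curr D E Q"
abbreviation "SC \<equiv> sem_curr C E (ccomp D E P Q)"
abbreviation "K c e \<equiv> coend_carrier cD SP SQ c e"
abbreviation "cls c e \<equiv> coend_class cC cD cE SP SQ c e"
abbreviation "gen c e \<equiv> coend_gen cC cD cE SP SQ c e"

definition Fm where "Fm c x = (case x of (d,S,T) \<Rightarrow> tclass E (I c) (tens Q (rep S) (rep T)))"

lemma mu_Fm: "mu D E P Q c e X = Fm c (rep X)"
  by (simp add: mu_def Fm_def)

lemma ttypeQ: "d \<in> sorts D \<Longrightarrow> valid_term E (cinst Q d) t \<Longrightarrow> ttype E (cinst Q d) t \<in> sorts E"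
  using wfE by (auto simp: valid_term_def ttype_def valid_path_def intro: ptgt_sorts)

lemma K_E: assumes "c \<in> sorts C" "(d,S,T) \<in> K c e"
  obtains s t where "valid_term D (cinst P c) s" "ttype D (cinst P c) s = d" "S = tclass D (cinst P c) s"
    "valid_term E (cinst Q d) t" "ttype E (cinst Q d) t = e" "T = tclass E (cinst Q d) t" "d \<in> sorts D"
  using assms by (auto simp: carrier_mem pobj_sem)

lemma K_I: assumes "c \<in> sorts C" "valid_term D (cinst P c) s" "valid_term E (cinst Q (ttype D (cinst P c) s)) t"
  shows "(ttype D (cinst P c) s, tclass D (cinst P c) s, tclass E (cinst Q (ttype D (cinst P c) s)) t) \<in> K c (ttype E (cinst Q (ttype D (cinst P c) s)) t)"
  unfolding carrier_mem pobj_sem sem_cat_simps using assms ttypeP[OF assms(1,2)] by blast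

lemma F_cls: assumes c: "c \<in> sorts C" and vs: "valid_term D (cinst P c) s" and vt: "valid_term E (cinst Q (ttype D (cinst P c) s)) t"
  shows "Fm c (ttype D (cinst P c) s, tclass D (cinst P c) s, tclass E (cinst Q (ttype D (cinst P c) s)) t) = tclass E (I c) (tens Q s t)"
proof -
  let ?s' = "rep (tclass D (cinst P c) s)" and ?t' = "rep (tclass E (cinst Q (ttype D (cinst P c) s)) t)"
  have ss: "teq D (cinst P c) s ?s'" using tclass_rep[OF vs] .
  have tt: "teq E (cinst Q (ttype D (cinst P c) s)) t ?t'" using tclass_rep[OF vt] .
  have "teq E (I c) (tens Q s t) (tens Q ?s' t)" using tens_teq1[OF c ss vt] .
  moreover have "teq E (I c) (tens Q ?s' t) (tens Q ?s' ?t')"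
  proof -
    have v': "valid_term D (cinst P c) ?s'" "ttype D (cinst P c) ?s' = ttype D (cinst P c) s"
      using teq_valid[OF wfD wfP[OF c] ss] by auto
    show ?thesis using tens_teq2[OF c v'(1)] tt v'(2) by simp
  qed
  ultimately have "teq E (I c) (tens Q s t) (tens Q ?s' ?t')" by (rule teq_trans)
  then show ?thesis unfolding Fm_def using tclass_eq by (metis (no_types, lifting) case_prod_conv)
qed

lemma pmorQ: assumes "valid_path D pg" "valid_term E (cinst Q (ptgt D pg)) t"
  shows "pmor SQ (pclass D pg) (c_id cE (ttype E (cinst Q (ptgt D pg)) t)) (tclass E (cinst Q (ptgt D pg)) t)
     = tclass E (cinst Q (fst pg)) (apply_path Q (snd pg) t)"
proof -
  have s: "ptgt D pg \<in> sorts D" using valid_path_sorts[OF wfD assms(1)] by auto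
  have "valid_path E (ttype E (cinst Q (ptgt D pg)) t, [])" using ttypeQ[OF s assms(2)] by (simp add: valid_path_def)
  from pmor_sem(1)[OF cpQ assms(1) this assms(2)] show ?thesis by simp
qed

lemma pmorP: assumes c: "c \<in> sorts C" and "valid_path D pg" "valid_term D (cinst P c) s" "ttype D (cinst P c) s = fst pg"
  shows "pmor SP (c_id cC c) (pclass D pg) (tclass D (cinst P c) s)
     = tclass D (cinst P c) (fst s, snd s @ snd pg)"
proof -
  have "valid_path C (c, [])" using c by (simp add: valid_path_def)
  from pmor_sem(1)[OF cpP this assms(2)] assms show ?thesis by simp
qed

lemma gen_intro: assumes c: "c \<in> sorts C" and pg: "valid_path D pg" and vs: "valid_term D (cinst P c) s"
    and ty: "ttype D (cinst P c) s = fst pg" and vt: "valid_term E (cinst Q (ptgt D pg)) t"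
  shows "gen c (ttype E (cinst Q (ptgt D pg)) t) (fst pg, tclass D (cinst P c) s, tclass E (cinst Q (fst pg)) (apply_path Q (snd pg) t))
     (ptgt D pg, tclass D (cinst P c) (fst s, snd s @ snd pg), tclass E (cinst Q (ptgt D pg)) t)"
  unfolding coend_gen_def
proof (rule bexI[of _ "pclass D pg"], rule bexI[of _ "tclass D (cinst P c) s"], rule bexI[of _ "tclass E (cinst Q (ptgt D pg)) t"])
  have d: "c_dom cD (pclass D pg) = fst pg" "c_cod cD (pclass D pg) = ptgt D pg"
    using sem_cat_dom[OF wfD pg] sem_cat_cod[OF wfD pg] by auto
  show "pclass D pg \<in> c_mor cD" using pg by (simp only: sem_cat_simps) blast
  show "tclass D (cinst P c) s \<in> pobj SP c (c_dom cD (pclass D pg))" unfolding pobj_sem d using vs ty by blast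
  show "tclass E (cinst Q (ptgt D pg)) t \<in> pobj SQ (c_cod cD (pclass D pg)) (ttype E (cinst Q (ptgt D pg)) t)"
    unfolding pobj_sem d using vt by blast
  show "(fst pg, tclass D (cinst P c) s, tclass E (cinst Q (fst pg)) (apply_path Q (snd pg) t)) =
    (c_dom cD (pclass D pg), tclass D (cinst P c) s,
     pmor SQ (pclass D pg) (c_id cE (ttype E (cinst Q (ptgt D pg)) t)) (tclass E (cinst Q (ptgt D pg)) t)) \<and>
    (ptgt D pg, tclass D (cinst P c) (fst s, snd s @ snd pg), tclass E (cinst Q (ptgt D pg)) t) =
    (c_cod cD (pclass D pg), pmor SP (c_id cC c) (pclass D pg) (tclass D (cinst P c) s), tclass E (cinst Q (ptgt D pg)) t)"
    using d pmorQ[OF pg vt] pmorP[OF c pg vs ty] by simp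
qed

lemma gen_elim: assumes c: "c \<in> sorts C" and g: "gen c e u v"
  obtains pg s t where "valid_path D pg" "valid_term D (cinst P c) s" "ttype D (cinst P c) s = fst pg"
    "valid_term E (cinst Q (ptgt D pg)) t" "ttype E (cinst Q (ptgt D pg)) t = e"
    "u = (fst pg, tclass D (cinst P c) s, tclass E (cinst Q (fst pg)) (apply_path Q (snd pg) t))"
    "v = (ptgt D pg, tclass D (cinst P c) (fst s, snd s @ snd pg), tclass E (cinst Q (ptgt D pg)) t)"
proof -
  from g obtain G p q where G: "G \<in> c_mor cD" "p \<in> pobj SP c (c_dom cD G)" "q \<in> pobj SQ (c_cod cD G) e"
    "u = (c_dom cD G, p, pmor SQ G (c_id cE e) q)" "v = (c_cod cD G, pmor SP (c_id cC c) G p, q)"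
    unfolding coend_gen_def by blast
  from G(1) obtain pg where pg: "valid_path D pg" "G = pclass D pg" by auto
  have d: "c_dom cD G = fst pg" "c_cod cD G = ptgt D pg"
    using sem_cat_dom[OF wfD pg(1)] sem_cat_cod[OF wfD pg(1)] pg(2) by auto
  from G(2) d obtain s where s: "valid_term D (cinst P c) s" "ttype D (cinst P c) s = fst pg" "p = tclass D (cinst P c) s"
    by (auto simp: pobj_sem)
  from G(3) d obtain t where t: "valid_term E (cinst Q (ptgt D pg)) t" "ttype E (cinst Q (ptgt D pg)) t = e" "q = tclass E (cinst Q (ptgt D pg)) t"
    by (auto simp: pobj_sem)
  show ?thesis
    apply (rule that[OF pg(1) s(1,2) t(1,2)])
    using G(4,5) d pg(2) s t pmorQ[OF pg(1) t(1)] pmorP[OF c pg(1) s(1,2)] by auto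
qed

lemma F_gen: assumes c: "c \<in> sorts C" and g: "gen c e u v" shows "Fm c u = Fm c v"
proof -
  from gen_elim[OF c g] obtain pg s t where h: "valid_path D pg" "valid_term D (cinst P c) s" "ttype D (cinst P c) s = fst pg"
    "valid_term E (cinst Q (ptgt D pg)) t" "ttype E (cinst Q (ptgt D pg)) t = e"
    "u = (fst pg, tclass D (cinst P c) s, tclass E (cinst Q (fst pg)) (apply_path Q (snd pg) t))"
    "v = (ptgt D pg, tclass D (cinst P c) (fst s, snd s @ snd pg), tclass E (cinst Q (ptgt D pg)) t)" by metis
  have pt: "path_ok D (fst pg) (snd pg)" "fst pg \<in> sorts D" using h(1) by (auto simp: valid_path_def)
  have va: "valid_term E (cinst Q (fst pg)) (apply_path Q (snd pg) t)"
    using apply_path_valid[OF cpQ pt(2) pt(1)] h(4) by simp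
  have vs2: "valid_term D (cinst P c) (fst s, snd s @ snd pg)" "ttype D (cinst P c) (fst s, snd s @ snd pg) = ptgt D pg"
    using valid_append[OF h(2), of "snd pg"] ttype_append[of D "cinst P c" s "snd pg"] h(3) pt(1)
    by (auto simp: prod.collapse)
  have "Fm c u = tclass E (I c) (tens Q s (apply_path Q (snd pg) t))"
    using F_cls[OF c h(2)] va h(3,6) by simp
  moreover have "Fm c v = tclass E (I c) (tens Q (fst s, snd s @ snd pg) t)"
    using F_cls[OF c vs2(1)] vs2(2) h(4,7) by simp
  ultimately show ?thesis by (simp add: tens_app1)
qed

lemma F_R: assumes c: "c \<in> sorts C" and "equivclp (gen c e) u v" shows "Fm c u = Fm c v"
  using equivclp_inv[OF F_gen[OF c] assms(2)] .

lemma mu_cls: assumes c: "c \<in> sorts C" and u: "u \<in> K c e" shows "mu D E P Q c e (cls c e u) = Fm c u"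
  unfolding mu_Fm using F_R[OF c rep_cls(2)[OF u]] by simp

end


lemma iso_intro:
  assumes nt: "is_nt A B P P' \<alpha>"
    and bobj: "\<And>a b y. a \<in> c_obj A \<Longrightarrow> b \<in> c_obj B \<Longrightarrow> y \<in> pobj P' a b \<Longrightarrow> \<beta> a b y \<in> pobj P a b"
    and inv1: "\<And>a b x. a \<in> c_obj A \<Longrightarrow> b \<in> c_obj B \<Longrightarrow> x \<in> pobj P a b \<Longrightarrow> \<beta> a b (\<alpha> a b x) = x"
    and inv2: "\<And>a b y. a \<in> c_obj A \<Longrightarrow> b \<in> c_obj B \<Longrightarrow> y \<in> pobj P' a b \<Longrightarrow> \<alpha> a b (\<beta> a b y) = y"
    and pm: "\<And>f g x. f \<in> c_mor A \<Longrightarrow> g \<in> c_mor B \<Longrightarrow> x \<in> pobj P (c_cod A f) (c_dom B g) \<Longrightarrow> pmor P f g x \<in> pobj P (c_dom A f) (c_cod B g)"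
    and oA: "\<And>f. f \<in> c_mor A \<Longrightarrow> c_dom A f \<in> c_obj A \<and> c_cod A f \<in> c_obj A"
    and oB: "\<And>f. f \<in> c_mor B \<Longrightarrow> c_dom B f \<in> c_obj B \<and> c_cod B f \<in> c_obj B"
  shows "is_prof_iso A B P P' \<alpha>"
  unfolding is_prof_iso_def
proof (intro conjI exI[of _ \<beta>])
  show "is_nt A B P P' \<alpha>" by (rule nt)
  show "\<forall>a\<in>c_obj A. \<forall>b\<in>c_obj B. (\<forall>x\<in>pobj P a b. \<beta> a b (\<alpha> a b x) = x) \<and> (\<forall>y\<in>pobj P' a b. \<alpha> a b (\<beta> a b y) = y)"
    using inv1 inv2 by blast
  show "is_nt A B P' P \<beta>"
    unfolding is_nt_def
  proof (intro conjI ballI)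
    fix a b y assume "a \<in> c_obj A" "b \<in> c_obj B" "y \<in> pobj P' a b" then show "\<beta> a b y \<in> pobj P a b" by (rule bobj)
  next
    fix f g y assume f: "f \<in> c_mor A" and g: "g \<in> c_mor B" and y: "y \<in> pobj P' (c_cod A f) (c_dom B g)"
    define x where "x = \<beta> (c_cod A f) (c_dom B g) y"
    have x: "x \<in> pobj P (c_cod A f) (c_dom B g)" using bobj oA[OF f] oB[OF g] y x_def by blast
    have y': "y = \<alpha> (c_cod A f) (c_dom B g) x" using inv2 oA[OF f] oB[OF g] y x_def by simp
    have "pmor P' f g y = \<alpha> (c_dom A f) (c_cod B g) (pmor P f g x)"
      using nt f g x y' unfolding is_nt_def by simp
    then show "\<beta> (c_dom A f) (c_cod B g) (pmor P' f g y) = pmor P f g (\<beta> (c_cod A f) (c_dom B g) y)"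
      using inv1 oA[OF f] oB[OF g] pm[OF f g x] x_def by simp
  qed
qed

context two begin

definition Tr where "Tr c w = (gsort (cinst P c) (fst (fst w)), tclass D (cinst P c) (fst (fst w), []),
    tclass E (cinst Q (gsort (cinst P c) (fst (fst w)))) (snd (fst w), snd w))"
definition Gm where "Gm c e w = cls c e (Tr c w)"
definition actf where "actf f x = (case x of (d,S,T) \<Rightarrow> (d, S, tclass E (cinst Q d) (fst (rep T), snd (rep T) @ [f])))"

lemma G_tens: assumes c: "c \<in> sorts C" and vs: "valid_term D (cinst P c) s" and vt: "valid_term E (cinst Q (ttype D (cinst P c) s)) t"
  shows "Gm c (ttype E (cinst Q (ttype D (cinst P c) s)) t) (tens Q s t) = cls c (ttype E (cinst Q (ttype D (cinst P c) s)) t) (ttype D (cinst P c) s, tclass D (cinst P c) s, tclass E (cinst Q (ttype D (cinst P c) s)) t)"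
proof -
  obtain x g where s: "s = (x,g)" by fastforce
  let ?pg = "(gsort (cinst P c) x, g)"
  have x: "x \<in> gens (cinst P c)" "valid_path D ?pg" using vs s by (auto simp: valid_term_def)
  have pt: "ptgt D ?pg = ttype D (cinst P c) s" using s by (simp add: ttype_def)
  have v0: "valid_term D (cinst P c) (x,[])" "ttype D (cinst P c) (x,[]) = fst ?pg"
    using valid_gen[OF c x(1)] by (auto simp: ttype_def)
  have "gen c (ttype E (cinst Q (ptgt D ?pg)) t) (fst ?pg, tclass D (cinst P c) (x,[]), tclass E (cinst Q (fst ?pg)) (apply_path Q (snd ?pg) t))
     (ptgt D ?pg, tclass D (cinst P c) (fst (x,[]), snd (x,[]) @ snd ?pg), tclass E (cinst Q (ptgt D ?pg)) t)"
    using gen_intro[OF c x(2) v0 ] vt pt by simp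
  then have "equivclp (gen c (ttype E (cinst Q (ttype D (cinst P c) s)) t)) (Tr c (tens Q s t)) (ttype D (cinst P c) s, tclass D (cinst P c) s, tclass E (cinst Q (ttype D (cinst P c) s)) t)"
    unfolding pt using s by (simp add: Tr_def tens_def Let_def r_into_equivclp)
  then show ?thesis unfolding Gm_def by (rule cls_eq)
qed

lemma Tr_K: assumes c: "c \<in> sorts C" and w: "valid_term E (I c) w"
  shows "Tr c w \<in> K c (ttype E (I c) w)"
    and "Fm c (Tr c w) = tclass E (I c) w"
proof -
  obtain x q h where ww: "w = ((x,q),h)" by (metis prod.collapse)
  have x: "x \<in> gens (cinst P c)" "q \<in> gens (cinst Q (gsort (cinst P c) x))" "path_ok E (gsort (cinst Q (gsort (cinst P c) x)) q) h"
    "gsort (cinst Q (gsort (cinst P c) x)) q \<in> sorts E"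
    using w ww by (auto simp: valid_term_def ccomp_gens valid_path_def)
  have v0: "valid_term D (cinst P c) (x,[])" and ty0: "ttype D (cinst P c) (x,[]) = gsort (cinst P c) x"
    using valid_gen[OF c x(1)] by (auto simp: ttype_def)
  have vt: "valid_term E (cinst Q (ttype D (cinst P c) (x,[]))) (q,h)" using x ty0 by (simp add: valid_term_def valid_path_def)
  have tyw: "ttype E (cinst Q (ttype D (cinst P c) (x,[]))) (q,h) = ttype E (I c) w" using ww ty0 by (simp add: ttype_def)
  show "Tr c w \<in> K c (ttype E (I c) w)" using K_I[OF c v0 vt] ww ty0 tyw by (simp add: Tr_def)
  show "Fm c (Tr c w) = tclass E (I c) w" using F_cls[OF c v0 vt] ww ty0 by (simp add: Tr_def tens_gen)
qed

lemma act_gen: assumes c: "c \<in> sorts C" and f: "f \<in> syms E" and g: "gen c (sdom E f) u v"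
  shows "gen c (scod E f) (actf f u) (actf f v)"
proof -
  from gen_elim[OF c g] obtain pg s t where h: "valid_path D pg" "valid_term D (cinst P c) s" "ttype D (cinst P c) s = fst pg"
    "valid_term E (cinst Q (ptgt D pg)) t" "ttype E (cinst Q (ptgt D pg)) t = sdom E f"
    "u = (fst pg, tclass D (cinst P c) s, tclass E (cinst Q (fst pg)) (apply_path Q (snd pg) t))"
    "v = (ptgt D pg, tclass D (cinst P c) (fst s, snd s @ snd pg), tclass E (cinst Q (ptgt D pg)) t)" by metis
  have pt: "path_ok D (fst pg) (snd pg)" "fst pg \<in> sorts D" "ptgt D pg \<in> sorts D" using h(1) valid_path_sorts[OF wfD h(1)] by (auto simp: valid_path_def)
  let ?a = "apply_path Q (snd pg) t"
  have va: "valid_term E (cinst Q (fst pg)) ?a" "ttype E (cinst Q (fst pg)) ?a = sdom E f"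
    using apply_path_valid[OF cpQ pt(2) pt(1)] h(4,5) by auto
  have pf: "path_ok E (sdom E f) [f]" using f by simp
  have r1: "tclass E (cinst Q (fst pg)) (fst (rep (tclass E (cinst Q (fst pg)) ?a)), snd (rep (tclass E (cinst Q (fst pg)) ?a)) @ [f])
      = tclass E (cinst Q (fst pg)) (fst ?a, snd ?a @ [f])"
  proof (rule tclass_eq)
    have e: "teq E (cinst Q (fst pg)) (rep (tclass E (cinst Q (fst pg)) ?a)) ?a" using teq_sym[OF tclass_rep[OF va(1)]] .
    have "ttype E (cinst Q (fst pg)) (rep (tclass E (cinst Q (fst pg)) ?a)) = sdom E f"
      using teq_valid[OF wfE wfQ[OF pt(2)] e] va(2) by simp
    then show "teq E (cinst Q (fst pg)) (fst (rep (tclass E (cinst Q (fst pg)) ?a)), snd (rep (tclass E (cinst Q (fst pg)) ?a)) @ [f]) (fst ?a, snd ?a @ [f])"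
      using teq_append[OF e] pf by simp
  qed
  have r2: "tclass E (cinst Q (ptgt D pg)) (fst (rep (tclass E (cinst Q (ptgt D pg)) t)), snd (rep (tclass E (cinst Q (ptgt D pg)) t)) @ [f])
      = tclass E (cinst Q (ptgt D pg)) (fst t, snd t @ [f])"
  proof (rule tclass_eq)
    have e: "teq E (cinst Q (ptgt D pg)) (rep (tclass E (cinst Q (ptgt D pg)) t)) t" using teq_sym[OF tclass_rep[OF h(4)]] .
    have "ttype E (cinst Q (ptgt D pg)) (rep (tclass E (cinst Q (ptgt D pg)) t)) = sdom E f"
      using teq_valid[OF wfE wfQ[OF pt(3)] e] h(5) by simp
    then show "teq E (cinst Q (ptgt D pg)) (fst (rep (tclass E (cinst Q (ptgt D pg)) t)), snd (rep (tclass E (cinst Q (ptgt D pg)) t)) @ [f]) (fst t, snd t @ [f])"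
      using teq_append[OF e] pf by simp
  qed
  have vtf: "valid_term E (cinst Q (ptgt D pg)) (fst t, snd t @ [f])" using valid_append[OF h(4)] h(5) pf by simp
  have gi: "gen c (ttype E (cinst Q (ptgt D pg)) (fst t, snd t @ [f])) (fst pg, tclass D (cinst P c) s, tclass E (cinst Q (fst pg)) (apply_path Q (snd pg) (fst t, snd t @ [f])))
     (ptgt D pg, tclass D (cinst P c) (fst s, snd s @ snd pg), tclass E (cinst Q (ptgt D pg)) (fst t, snd t @ [f]))"
    using gen_intro[OF c h(1) h(2) h(3) vtf] .
  show ?thesis using gi r1 r2 h(6,7) unfolding actf_def by (simp add: apply_path_append)
qed

lemma act_R: assumes c: "c \<in> sorts C" and f: "f \<in> syms E" and r: "equivclp (gen c (sdom E f)) u v"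
  shows "equivclp (gen c (scod E f)) (actf f u) (actf f v)"
  using equivclp_map[of "gen c (sdom E f)" "gen c (scod E f)" "actf f", OF _ r] act_gen[OF c f]
  by (simp add: r_into_equivclp)

lemma G_teq: assumes c: "c \<in> sorts C" and "teq E (I c) w w'"
  shows "Gm c (ttype E (I c) w) w = Gm c (ttype E (I c) w) w'"
  using assms(2)
proof induction
  case (teq_eq w w')
  then consider (a) s s' q where "w = tens Q s (q, [])" "w' = tens Q s' (q, [])" "(s,s') \<in> ieqs (cinst P c)" "q \<in> gens (cinst Q (ttype D (cinst P c) s))"
    | (b) x t t' where "w = tens Q (x, []) t" "w' = tens Q (x, []) t'" "x \<in> gens (cinst P c)" "(t,t') \<in> ieqs (cinst Q (gsort (cinst P c) x))"
    unfolding ccomp_ieqs by blast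
  then show ?case
  proof cases
    case a
    have v: "valid_term D (cinst P c) s" "valid_term D (cinst P c) s'" "ttype D (cinst P c) s = ttype D (cinst P c) s'"
      using wfP[OF c] a by (auto simp: wf_inspres_def)
    have vq: "valid_term E (cinst Q (ttype D (cinst P c) s)) (q,[])" using valid_genQ ttypeP[OF c v(1)] a by blast
    have ty: "ttype E (I c) w = ttype E (cinst Q (ttype D (cinst P c) s)) (q,[])" using tens_valid[OF c v(1) vq] a by simp
    have cl: "tclass D (cinst P c) s = tclass D (cinst P c) s'" using a by (auto intro!: tclass_eq teq.teq_eq)
    show ?thesis unfolding ty using G_tens[OF c v(1) vq] G_tens[OF c v(2)] vq v(3) cl a by simp
  next
    case b
    have v: "valid_term D (cinst P c) (x,[])" using valid_gen[OF c b(3)] .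
    have ty0: "ttype D (cinst P c) (x,[]) = gsort (cinst P c) x" by (simp add: ttype_def)
    have vt: "valid_term E (cinst Q (gsort (cinst P c) x)) t" "valid_term E (cinst Q (gsort (cinst P c) x)) t'"
      "ttype E (cinst Q (gsort (cinst P c) x)) t = ttype E (cinst Q (gsort (cinst P c) x)) t'"
      using wfQ[OF gsortP[OF c b(3)]] b by (auto simp: wf_inspres_def)
    have ty: "ttype E (I c) w = ttype E (cinst Q (gsort (cinst P c) x)) t" using tens_valid[OF c v] vt b ty0 by simp
    have cl: "tclass E (cinst Q (gsort (cinst P c) x)) t = tclass E (cinst Q (gsort (cinst P c) x)) t'" using b by (auto intro!: tclass_eq teq.teq_eq)
    have g1: "Gm c (ttype E (cinst Q (gsort (cinst P c) x)) t) (tens Q (x,[]) t) = cls c (ttype E (cinst Q (gsort (cinst P c) x)) t) (gsort (cinst P c) x, tclass D (cinst P c) (x,[]), tclass E (cinst Q (gsort (cinst P c) x)) t)"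
      using G_tens[OF c v, of t] vt(1) ty0 by simp
    have g2: "Gm c (ttype E (cinst Q (gsort (cinst P c) x)) t') (tens Q (x,[]) t') = cls c (ttype E (cinst Q (gsort (cinst P c) x)) t') (gsort (cinst P c) x, tclass D (cinst P c) (x,[]), tclass E (cinst Q (gsort (cinst P c) x)) t')"
      using G_tens[OF c v, of t'] vt(2) ty0 by simp
    show ?thesis unfolding b(1) b(2) using g1 g2 vt(3) cl ty[unfolded b(1)] by simp
  qed
next
  case (teq_refl t) then show ?case by simp
next
  case (teq_sym s t)
  then show ?case using teq_valid[OF wfE wf_I[OF c] teq_sym(1)] by simp
next
  case (teq_trans s t u)
  then show ?case using teq_valid[OF wfE wf_I[OF c] teq_trans(1)] by simp
next
  case (teq_right w w' f)
  have vw: "valid_term E (I c) w" "valid_term E (I c) w'" "ttype E (I c) w' = sdom E f"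
    using teq_valid[OF wfE wf_I[OF c] teq_right(1)] teq_right(3) by auto
  have K1: "Tr c w \<in> K c (sdom E f)" "Tr c w' \<in> K c (sdom E f)" using Tr_K(1)[OF c vw(1)] Tr_K(1)[OF c vw(2)] teq_right(3) vw(3) by auto
  have "cls c (sdom E f) (Tr c w) = cls c (sdom E f) (Tr c w')" using teq_right(4) teq_right(3) unfolding Gm_def by simp
  then have R: "equivclp (gen c (sdom E f)) (Tr c w) (Tr c w')" using cls_eqD[OF K1(2)] by blast
  have A: "actf f (Tr c z) = Tr c (fst z, snd z @ [f])" if vz: "valid_term E (I c) z" and tz: "ttype E (I c) z = sdom E f" for z
  proof -
    obtain x q h where zz: "z = ((x,q),h)" by (metis prod.collapse)
    have x: "x \<in> gens (cinst P c)" "valid_term E (cinst Q (gsort (cinst P c) x)) (q,h)"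
      "ttype E (cinst Q (gsort (cinst P c) x)) (q,h) = sdom E f"
      using vz zz tz by (auto simp: valid_term_def ccomp_gens valid_path_def ttype_def)
    have gx: "gsort (cinst P c) x \<in> sorts D" using gsortP[OF c x(1)] .
    have e: "teq E (cinst Q (gsort (cinst P c) x)) (rep (tclass E (cinst Q (gsort (cinst P c) x)) (q,h))) (q,h)"
      using teq_sym[OF tclass_rep[OF x(2)]] .
    have "ttype E (cinst Q (gsort (cinst P c) x)) (rep (tclass E (cinst Q (gsort (cinst P c) x)) (q,h))) = sdom E f"
      using teq_valid[OF wfE wfQ[OF gx] e] x(3) by simp
    then have "teq E (cinst Q (gsort (cinst P c) x)) (fst (rep (tclass E (cinst Q (gsort (cinst P c) x)) (q,h))), snd (rep (tclass E (cinst Q (gsort (cinst P c) x)) (q,h))) @ [f]) (q, h @ [f])"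
      using teq_append[OF e, of "[f]"] teq_right(2) by simp
    then show ?thesis using zz by (simp add: actf_def Tr_def tclass_eq)
  qed
  have "equivclp (gen c (scod E f)) (actf f (Tr c w)) (actf f (Tr c w'))" using act_R[OF c teq_right(2) R] .
  then have "equivclp (gen c (scod E f)) (Tr c (fst w, snd w @ [f])) (Tr c (fst w', snd w' @ [f]))"
    using A[OF vw(1)] A[OF vw(2)] teq_right(3) vw(3) by simp
  then show ?case unfolding Gm_def by (simp add: cls_eq)
next
  case (teq_ceq z p q)
  obtain x q0 h where zz: "z = ((x,q0),h)" by (metis prod.collapse)
  have x: "x \<in> gens (cinst P c)" "valid_term E (cinst Q (gsort (cinst P c) x)) (q0,h)"
    "ttype E (cinst Q (gsort (cinst P c) x)) (q0,h) = fst p"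
    using teq_ceq zz by (auto simp: valid_term_def ccomp_gens valid_path_def ttype_def)
  have "teq E (cinst Q (gsort (cinst P c) x)) (fst (q0,h), snd (q0,h) @ snd p) (fst (q0,h), snd (q0,h) @ snd q)"
    using teq.teq_ceq[OF x(2) teq_ceq(2) x(3)[symmetric]] .
  then have "Tr c (fst z, snd z @ snd p) = Tr c (fst z, snd z @ snd q)"
    using zz by (simp add: Tr_def tclass_eq)
  then show ?case unfolding Gm_def by simp
qed

end


context two begin

lemma X_E: assumes c: "c \<in> sorts C" and X: "X \<in> pobj (prof_comp cC cD cE SP SQ) c e"
  obtains s t where "valid_term D (cinst P c) s" "valid_term E (cinst Q (ttype D (cinst P c) s)) t"
    "ttype E (cinst Q (ttype D (cinst P c) s)) t = e"
    "rep X = (ttype D (cinst P c) s, tclass D (cinst P c) s, tclass E (cinst Q (ttype D (cinst P c) s)) t)"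
    "X = cls c e (rep X)" "mu D E P Q c e X = tclass E (I c) (tens Q s t)"
proof -
  have r: "rep X \<in> K c e" "X = cls c e (rep X)" using pobj_comp_rep[OF X] by auto
  obtain d S T where dST: "rep X = (d,S,T)" by (metis prod.collapse)
  from K_E[OF c r(1)[unfolded dST]] obtain s t where st: "valid_term D (cinst P c) s" "ttype D (cinst P c) s = d" "S = tclass D (cinst P c) s"
    "valid_term E (cinst Q d) t" "ttype E (cinst Q d) t = e" "T = tclass E (cinst Q d) t" by metis
  show ?thesis
    apply (rule that[of s t])
    using st dST r F_cls[OF c st(1), of t] by (auto simp: mu_Fm)
qed

lemma sem_obj: "wf_catpres A \<Longrightarrow> f \<in> c_mor (sem_cat A) \<Longrightarrow> c_dom (sem_cat A) f \<in> c_obj (sem_cat A) \<and> c_cod (sem_cat A) f \<in> c_obj (sem_cat A)"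
  using sem_cat_dom sem_cat_cod valid_path_sorts by fastforce

lemma beta_obj: assumes c: "c \<in> sorts C" and U: "U \<in> pobj SC c e"
  shows "Gm c e (rep U) \<in> pobj (prof_comp cC cD cE SP SQ) c e"
    and "mu D E P Q c e (Gm c e (rep U)) = U"
proof -
  from U obtain w where w: "valid_term E (I c) w" "ttype E (I c) w = e" "U = tclass E (I c) w" by (auto simp: pobj_sem)
  have e: "teq E (I c) w (rep U)" using tclass_rep[OF w(1)] w(3) by simp
  have v: "valid_term E (I c) (rep U)" "ttype E (I c) (rep U) = e" using teq_valid[OF wfE wf_I[OF c] e] w by auto
  have K: "Tr c (rep U) \<in> K c e" using Tr_K(1)[OF c v(1)] v(2) by simp
  then show "Gm c e (rep U) \<in> pobj (prof_comp cC cD cE SP SQ) c e" unfolding Gm_def pobj_comp by blast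
  have "mu D E P Q c e (Gm c e (rep U)) = Fm c (Tr c (rep U))" unfolding Gm_def using mu_cls[OF c K] .
  also have "\<dots> = tclass E (I c) (rep U)" using Tr_K(2)[OF c v(1)] .
  also have "\<dots> = U" using w(3) e tclass_eq by metis
  finally show "mu D E P Q c e (Gm c e (rep U)) = U" .
qed

lemma beta_mu: assumes c: "c \<in> sorts C" and X: "X \<in> pobj (prof_comp cC cD cE SP SQ) c e"
  shows "Gm c e (rep (mu D E P Q c e X)) = X"
proof -
  from X_E[OF c X] obtain s t where st: "valid_term D (cinst P c) s" "valid_term E (cinst Q (ttype D (cinst P c) s)) t"
    "ttype E (cinst Q (ttype D (cinst P c) s)) t = e"
    "rep X = (ttype D (cinst P c) s, tclass D (cinst P c) s, tclass E (cinst Q (ttype D (cinst P c) s)) t)"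
    "X = cls c e (rep X)" "mu D E P Q c e X = tclass E (I c) (tens Q s t)" by metis
  have v: "valid_term E (I c) (tens Q s t)" "ttype E (I c) (tens Q s t) = e" using tens_valid[OF c st(1,2)] st(3) by auto
  have "teq E (I c) (tens Q s t) (rep (tclass E (I c) (tens Q s t)))" using tclass_rep[OF v(1)] .
  then have "Gm c e (tens Q s t) = Gm c e (rep (tclass E (I c) (tens Q s t)))" using G_teq[OF c] v(2) by metis
  moreover have "Gm c e (tens Q s t) = X" using G_tens[OF c st(1,2)] st(3,4,5) by simp
  ultimately show ?thesis using st(6) by simp
qed

lemma mu_nat: assumes f: "f \<in> c_mor cC" and h: "h \<in> c_mor cE"
    and X: "X \<in> pobj (prof_comp cC cD cE SP SQ) (c_cod cC f) (c_dom cE h)"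
  shows "mu D E P Q (c_dom cC f) (c_cod cE h) (pmor (prof_comp cC cD cE SP SQ) f h X) =
         pmor SC f h (mu D E P Q (c_cod cC f) (c_dom cE h) X)"
    and "pmor (prof_comp cC cD cE SP SQ) f h X \<in> pobj (prof_comp cC cD cE SP SQ) (c_dom cC f) (c_cod cE h)"
proof -
  from f obtain pf where pf: "valid_path C pf" "f = pclass C pf" by auto
  from h obtain ph where ph: "valid_path E ph" "h = pclass E ph" by auto
  have fd: "c_dom cC f = fst pf" "c_cod cC f = ptgt C pf" using pf sem_cat_dom[OF wfC] sem_cat_cod[OF wfC] by auto
  have hd: "c_dom cE h = fst ph" "c_cod cE h = ptgt E ph" using ph sem_cat_dom[OF wfE] sem_cat_cod[OF wfE] by auto
  have sc: "fst pf \<in> sorts C" "ptgt C pf \<in> sorts C" using valid_path_sorts[OF wfC pf(1)] by auto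
  let ?c = "ptgt C pf"
  from X_E[OF sc(2), of X "fst ph"] X fd hd obtain s t where st: "valid_term D (cinst P ?c) s" "valid_term E (cinst Q (ttype D (cinst P ?c) s)) t"
    "ttype E (cinst Q (ttype D (cinst P ?c) s)) t = fst ph"
    "rep X = (ttype D (cinst P ?c) s, tclass D (cinst P ?c) s, tclass E (cinst Q (ttype D (cinst P ?c) s)) t)"
    "mu D E P Q ?c (fst ph) X = tclass E (I ?c) (tens Q s t)" by metis
  let ?b = "ttype D (cinst P ?c) s"
  have b: "?b \<in> sorts D" using ttypeP[OF sc(2) st(1)] .
  have vb: "valid_path D (?b, [])" using b by (simp add: valid_path_def)
  let ?s' = "apply_path P (snd pf) s"
  have ps: "pmor SP f (c_id cD ?b) (tclass D (cinst P ?c) s) = tclass D (cinst P (fst pf)) ?s'"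
    "valid_term D (cinst P (fst pf)) ?s'" "ttype D (cinst P (fst pf)) ?s' = ?b"
    using pmor_sem[OF cpP pf(1) vb st(1)] pf(2) by auto
  let ?t' = "(fst t, snd t @ snd ph)"
  have pt: "pmor SQ (c_id cD ?b) h (tclass E (cinst Q ?b) t) = tclass E (cinst Q ?b) ?t'"
    "valid_term E (cinst Q ?b) ?t'" "ttype E (cinst Q ?b) ?t' = ptgt E ph"
    using pmor_sem[OF cpQ vb ph(1), of t] st(2,3) ph(2) by auto
  have pm: "pmor (prof_comp cC cD cE SP SQ) f h X = cls (fst pf) (ptgt E ph) (?b, tclass D (cinst P (fst pf)) ?s', tclass E (cinst Q ?b) ?t')"
    unfolding pmor_comp using st(4) ps(1) pt(1) fd hd by simp
  have K: "(?b, tclass D (cinst P (fst pf)) ?s', tclass E (cinst Q ?b) ?t') \<in> K (fst pf) (ptgt E ph)"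
    using K_I[OF sc(1) ps(2), of ?t'] ps(3) pt(2,3) by simp
  then show "pmor (prof_comp cC cD cE SP SQ) f h X \<in> pobj (prof_comp cC cD cE SP SQ) (c_dom cC f) (c_cod cE h)"
    unfolding pm fd hd pobj_comp by blast
  have "mu D E P Q (c_dom cC f) (c_cod cE h) (pmor (prof_comp cC cD cE SP SQ) f h X) = tclass E (I (fst pf)) (tens Q ?s' ?t')"
    unfolding pm fd hd using mu_cls[OF sc(1) K] F_cls[OF sc(1) ps(2)] ps(3) pt(2) by simp
  moreover have "pmor SC f h (mu D E P Q (c_cod cC f) (c_dom cE h) X) = tclass E (I (fst pf)) (tens Q ?s' ?t')"
  proof -
    have v: "valid_term E (I ?c) (tens Q s t)" "ttype E (I ?c) (tens Q s t) = fst ph" using tens_valid[OF sc(2) st(1,2)] st(3) by auto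
    have "pmor SC f h (tclass E (I ?c) (tens Q s t)) = tclass E (I (fst pf)) (fst (apply_path (ccomp D E P Q) (snd pf) (tens Q s t)), snd (apply_path (ccomp D E P Q) (snd pf) (tens Q s t)) @ snd ph)"
      using pmor_sem(1)[OF curr_pres_ccomp pf(1) ph(1) v(1) v(2)] pf(2) ph(2) by simp
    also have "\<dots> = tclass E (I (fst pf)) (tens Q ?s' ?t')" by (simp add: apply_path_ccomp tens_app2)
    finally show ?thesis using st(5) fd hd by simp
  qed
  ultimately show "mu D E P Q (c_dom cC f) (c_cod cE h) (pmor (prof_comp cC cD cE SP SQ) f h X) =
         pmor SC f h (mu D E P Q (c_cod cC f) (c_dom cE h) X)" by simp
qed

lemma mu_obj: assumes c: "c \<in> sorts C" and X: "X \<in> pobj (prof_comp cC cD cE SP SQ) c e"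
  shows "mu D E P Q c e X \<in> pobj SC c e"
proof -
  from X_E[OF c X] obtain s t where st: "valid_term D (cinst P c) s" "valid_term E (cinst Q (ttype D (cinst P c) s)) t"
    "ttype E (cinst Q (ttype D (cinst P c) s)) t = e" "mu D E P Q c e X = tclass E (I c) (tens Q s t)" by metis
  moreover have "valid_term E (I c) (tens Q s t) \<and> ttype E (I c) (tens Q s t) = e" using tens_valid[OF c st(1,2)] st(3) by simp
  ultimately show ?thesis unfolding pobj_sem by blast
qed

theorem mu_iso: "is_prof_iso cC cE (prof_comp cC cD cE SP SQ) SC (mu D E P Q)"
proof (rule iso_intro[where \<beta> = "\<lambda>c e U. Gm c e (rep U)"])
  show "is_nt cC cE (prof_comp cC cD cE SP SQ) SC (mu D E P Q)"
    unfolding is_nt_def using mu_obj mu_nat(1) by auto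
  show "\<And>a b y. a \<in> c_obj cC \<Longrightarrow> b \<in> c_obj cE \<Longrightarrow> y \<in> pobj SC a b \<Longrightarrow> Gm a b (rep y) \<in> pobj (prof_comp cC cD cE SP SQ) a b"
    using beta_obj(1) by auto
  show "\<And>a b x. a \<in> c_obj cC \<Longrightarrow> b \<in> c_obj cE \<Longrightarrow> x \<in> pobj (prof_comp cC cD cE SP SQ) a b \<Longrightarrow> Gm a b (rep (mu D E P Q a b x)) = x"
    using beta_mu by auto
  show "\<And>a b y. a \<in> c_obj cC \<Longrightarrow> b \<in> c_obj cE \<Longrightarrow> y \<in> pobj SC a b \<Longrightarrow> mu D E P Q a b (Gm a b (rep y)) = y"
    using beta_obj(2) by auto
  show "\<And>f g x. f \<in> c_mor cC \<Longrightarrow> g \<in> c_mor cE \<Longrightarrow> x \<in> pobj (prof_comp cC cD cE SP SQ) (c_cod cC f) (c_dom cE g) \<Longrightarrow>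
       pmor (prof_comp cC cD cE SP SQ) f g x \<in> pobj (prof_comp cC cD cE SP SQ) (c_dom cC f) (c_cod cE g)"
    using mu_nat(2) by blast
  show "\<And>f. f \<in> c_mor cC \<Longrightarrow> c_dom cC f \<in> c_obj cC \<and> c_cod cC f \<in> c_obj cC" using sem_obj[OF wfC] by blast
  show "\<And>f. f \<in> c_mor cE \<Longrightarrow> c_dom cE f \<in> c_obj cE \<and> c_cod cE f \<in> c_obj cE" using sem_obj[OF wfE] by blast
qed

lemma mu_class: assumes c: "c \<in> sorts C" and vs: "valid_term D (cinst P c) s" and vt: "valid_term E (cinst Q (ttype D (cinst P c) s)) t"
  shows "mu D E P Q c (ttype E (cinst Q (ttype D (cinst P c) s)) t)
            (cls c (ttype E (cinst Q (ttype D (cinst P c) s)) t)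
               (ttype D (cinst P c) s, tclass D (cinst P c) s, tclass E (cinst Q (ttype D (cinst P c) s)) t))
          = tclass E (I c) (tens Q s t)"
  using mu_cls[OF c K_I[OF c vs vt]] F_cls[OF c vs vt] by simp

end


lemma mcomp_valid: assumes "inst_morph D I J F" "inst_morph D J K G" "x \<in> gens I"
  shows "valid_term D K (mcomp G F x) \<and> ttype D K (mcomp G F x) = gsort I x"
proof -
  have "valid_term D J (F x)" "ttype D J (F x) = gsort I x" using assms by (auto simp: inst_morph_def)
  then show ?thesis using inst_morph_valid[OF assms(2)] by (simp add: mcomp_def)
qed

lemma morph_eq_teq':
  assumes "morph_eq D I J F G" "\<forall>x\<in>gens I. valid_term D J (F x) \<and> ttype D J (F x) = gsort I x" "valid_term D I t"
  shows "teq D J (tapp F t) (tapp G t)"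
proof -
  have "teq D J (F (fst t)) (G (fst t))" using assms by (auto simp: morph_eq_def valid_term_def)
  moreover have "path_ok D (ttype D J (F (fst t))) (snd t)" using assms
    by (auto simp: valid_term_def valid_path_def)
  ultimately show ?thesis using teq_append by (fastforce simp: tapp_def)
qed

lemma nat_path:
  assumes cQ: "curr_pres D E Q" and cQ': "curr_pres D E Q'" and psi: "curr_morph D E Q Q' \<psi>"
  shows "d0 \<in> sorts D \<Longrightarrow> path_ok D d0 g \<Longrightarrow> valid_term E (cinst Q (ptgt D (d0,g))) t \<Longrightarrow>
    teq E (cinst Q' d0) (tapp (\<psi> d0) (apply_path Q g t)) (apply_path Q' g (tapp (\<psi> (ptgt D (d0,g))) t))"
proof (induction g arbitrary: d0)
  have wfD: "wf_catpres D" and wfE: "wf_catpres E" using cQ by (auto simp: curr_pres_def)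
  {
  case Nil
  have "inst_morph E (cinst Q d0) (cinst Q' d0) (\<psi> d0)" using psi Nil by (auto simp: curr_morph_def)
  then have "valid_term E (cinst Q' d0) (tapp (\<psi> d0) t)" using inst_morph_valid Nil by fastforce
  then show ?case by (simp add: teq_refl)
next
  case (Cons f g)
  have f: "f \<in> syms D" "sdom D f = d0" "path_ok D (scod D f) g" using Cons by auto
  have sf: "scod D f \<in> sorts D" using wfD f by (auto simp: wf_catpres_def)
  let ?d1 = "scod D f" and ?w = "apply_path Q g t"
  have pt: "ptgt D (d0, f#g) = ptgt D (?d1, g)" by simp
  have vw: "valid_term E (cinst Q ?d1) ?w" using apply_path_valid[OF cQ sf f(3)] Cons(4) by simp
  have mQ: "inst_morph E (cinst Q ?d1) (cinst Q d0) (cmor Q f)" using cQ f by (auto simp: curr_pres_def)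
  have mQ': "inst_morph E (cinst Q' ?d1) (cinst Q' d0) (cmor Q' f)" using cQ' f by (auto simp: curr_pres_def)
  have m0: "inst_morph E (cinst Q d0) (cinst Q' d0) (\<psi> d0)" using psi Cons(2) by (auto simp: curr_morph_def)
  have m1: "inst_morph E (cinst Q ?d1) (cinst Q' ?d1) (\<psi> ?d1)" using psi sf by (auto simp: curr_morph_def)
  have me: "morph_eq E (cinst Q ?d1) (cinst Q' d0) (mcomp (\<psi> d0) (cmor Q f)) (mcomp (cmor Q' f) (\<psi> ?d1))"
    using psi f by (auto simp: curr_morph_def)
  have "teq E (cinst Q' d0) (tapp (mcomp (\<psi> d0) (cmor Q f)) ?w) (tapp (mcomp (cmor Q' f) (\<psi> ?d1)) ?w)"
    using morph_eq_teq'[OF me _ vw] mcomp_valid[OF mQ m0] by blast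
  then have e1: "teq E (cinst Q' d0) (tapp (\<psi> d0) (tapp (cmor Q f) ?w)) (tapp (cmor Q' f) (tapp (\<psi> ?d1) ?w))"
    by (simp add: tapp_tapp)
  have "teq E (cinst Q' ?d1) (tapp (\<psi> ?d1) ?w) (apply_path Q' g (tapp (\<psi> (ptgt D (?d1,g))) t))"
    using Cons.IH[OF sf f(3)] Cons(4) by simp
  moreover have "wf_inspres E (cinst Q' ?d1)" using cQ' sf by (auto simp: curr_pres_def)
  ultimately have e2: "teq E (cinst Q' d0) (tapp (cmor Q' f) (tapp (\<psi> ?d1) ?w)) (tapp (cmor Q' f) (apply_path Q' g (tapp (\<psi> (ptgt D (?d1,g))) t)))"
    using inst_morph_teq[OF wfE _ mQ'] by blast
  show ?case using teq_trans[OF e1 e2] pt by simp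
  }
qed

locale twotwo = two C D E P Q + T2: two C D E P' Q'
  for C :: "('c,'f) catpres" and D :: "('d,'g) catpres" and E :: "('e,'h) catpres"
    and P :: "('c,'f,'x,'d,'g) curr" and Q :: "('d,'g,'y,'e,'h) curr"
    and P' :: "('c,'f,'x2,'d,'g) curr" and Q' :: "('d,'g,'y2,'e,'h) curr" +
  fixes \<phi> \<psi>
  assumes phi: "curr_morph C D P P' \<phi>" and psi: "curr_morph D E Q Q' \<psi>"
begin

abbreviation "\<Phi> c \<equiv> ccomp_morph P Q' \<phi> \<psi> c"

lemma phi_m: "c \<in> sorts C \<Longrightarrow> inst_morph D (cinst P c) (cinst P' c) (\<phi> c)" using phi by (auto simp: curr_morph_def)
lemma psi_m: "d \<in> sorts D \<Longrightarrow> inst_morph E (cinst Q d) (cinst Q' d) (\<psi> d)" using psi by (auto simp: curr_morph_def)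

lemma nat_tens: assumes c: "c \<in> sorts C" and vs: "valid_term D (cinst P c) s" and vt: "valid_term E (cinst Q (ttype D (cinst P c) s)) t"
  shows "teq E (T2.I c) (tapp (\<Phi> c) (tens Q s t)) (tens Q' (tapp (\<phi> c) s) (tapp (\<psi> (ttype D (cinst P c) s)) t))"
proof -
  obtain x g where s: "s = (x,g)" by fastforce
  let ?x0 = "gsort (cinst P c) x"
  have x: "x \<in> gens (cinst P c)" "path_ok D ?x0 g" "?x0 \<in> sorts D" using vs s by (auto simp: valid_term_def valid_path_def)
  have pt: "ptgt D (?x0, g) = ttype D (cinst P c) s" using s by (simp add: ttype_def)
  let ?u = "apply_path Q g t"
  have eq1: "tapp (\<Phi> c) (tens Q s t) = tens Q' (\<phi> c x) (tapp (\<psi> ?x0) ?u)"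
    using s tens_app2[of Q' "\<phi> c x" "(fst (\<psi> ?x0 (fst ?u)), snd (\<psi> ?x0 (fst ?u)))" "snd ?u"]
    by (simp add: tens_def Let_def tapp_def ccomp_morph_def)
  have np: "teq E (cinst Q' ?x0) (tapp (\<psi> ?x0) ?u) (apply_path Q' g (tapp (\<psi> (ttype D (cinst P c) s)) t))"
    using nat_path[OF cpQ T2.cpQ psi x(3) x(2)] vt pt by simp
  have vphi: "valid_term D (cinst P' c) (\<phi> c x)" "ttype D (cinst P' c) (\<phi> c x) = ?x0"
    using phi_m[OF c] x(1) by (auto simp: inst_morph_def)
  have "teq E (T2.I c) (tens Q' (\<phi> c x) (tapp (\<psi> ?x0) ?u)) (tens Q' (\<phi> c x) (apply_path Q' g (tapp (\<psi> (ttype D (cinst P c) s)) t)))"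
    using T2.tens_teq2[OF c vphi(1)] np vphi(2) by simp
  moreover have "tens Q' (\<phi> c x) (apply_path Q' g (tapp (\<psi> (ttype D (cinst P c) s)) t)) = tens Q' (tapp (\<phi> c) s) (tapp (\<psi> (ttype D (cinst P c) s)) t)"
    using s tens_app1[of Q' "\<phi> c x" g] by (simp add: tapp_def)
  ultimately show ?thesis using eq1 by simp
qed

lemma Phi_morph: assumes c: "c \<in> sorts C" shows "inst_morph E (I c) (T2.I c) (\<Phi> c)"
  unfolding inst_morph_def
proof (intro conjI ballI)
  fix w assume "w \<in> gens (I c)"
  then obtain x q where w: "w = (x,q)" "x \<in> gens (cinst P c)" "q \<in> gens (cinst Q (gsort (cinst P c) x))"
    by (auto simp: ccomp_gens)
  let ?x0 = "gsort (cinst P c) x"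
  have x0: "?x0 \<in> sorts D" using gsortP[OF c w(2)] .
  have vphi: "valid_term D (cinst P' c) (\<phi> c x)" "ttype D (cinst P' c) (\<phi> c x) = ?x0"
    using phi_m[OF c] w by (auto simp: inst_morph_def)
  have vpsi: "valid_term E (cinst Q' ?x0) (\<psi> ?x0 q)" "ttype E (cinst Q' ?x0) (\<psi> ?x0 q) = gsort (cinst Q ?x0) q"
    using psi_m[OF x0] w by (auto simp: inst_morph_def)
  show "valid_term E (T2.I c) (\<Phi> c w)" "ttype E (T2.I c) (\<Phi> c w) = gsort (I c) w"
    using T2.tens_valid[OF c vphi(1)] vphi(2) vpsi w by (auto simp: ccomp_morph_def)
next
  fix pr assume "pr \<in> ieqs (I c)"
  then consider (a) s s' q where "pr = (tens Q s (q, []), tens Q s' (q, []))" "(s,s') \<in> ieqs (cinst P c)" "q \<in> gens (cinst Q (ttype D (cinst P c) s))"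
    | (b) x t t' where "pr = (tens Q (x, []) t, tens Q (x, []) t')" "x \<in> gens (cinst P c)" "(t,t') \<in> ieqs (cinst Q (gsort (cinst P c) x))"
    unfolding ccomp_ieqs by blast
  then show "case pr of (s, t) \<Rightarrow> teq E (T2.I c) (tapp (\<Phi> c) s) (tapp (\<Phi> c) t)"
  proof cases
    case a
    have v: "valid_term D (cinst P c) s" "valid_term D (cinst P c) s'" "ttype D (cinst P c) s = ttype D (cinst P c) s'"
      using wfP[OF c] a by (auto simp: wf_inspres_def)
    let ?d = "ttype D (cinst P c) s"
    have d: "?d \<in> sorts D" using ttypeP[OF c v(1)] .
    have vq: "valid_term E (cinst Q ?d) (q,[])" using valid_genQ d a by blast
    have e1: "teq E (T2.I c) (tapp (\<Phi> c) (tens Q s (q,[]))) (tens Q' (tapp (\<phi> c) s) (tapp (\<psi> ?d) (q,[])))"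
      using nat_tens[OF c v(1) vq] .
    have e3: "teq E (T2.I c) (tapp (\<Phi> c) (tens Q s' (q,[]))) (tens Q' (tapp (\<phi> c) s') (tapp (\<psi> ?d) (q,[])))"
      using nat_tens[OF c v(2)] vq v(3) by simp
    have ps: "teq D (cinst P' c) (tapp (\<phi> c) s) (tapp (\<phi> c) s')" using phi_m[OF c] a by (auto simp: inst_morph_def)
    have tyf: "ttype D (cinst P' c) (tapp (\<phi> c) s) = ?d" using inst_morph_valid[OF phi_m[OF c] v(1)] by simp
    have vq': "valid_term E (cinst Q' ?d) (tapp (\<psi> ?d) (q,[]))" using inst_morph_valid[OF psi_m[OF d] vq] by simp
    have e2: "teq E (T2.I c) (tens Q' (tapp (\<phi> c) s) (tapp (\<psi> ?d) (q,[]))) (tens Q' (tapp (\<phi> c) s') (tapp (\<psi> ?d) (q,[])))"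
      using T2.tens_teq1[OF c ps] vq' tyf by simp
    show ?thesis using teq_trans[OF teq_trans[OF e1 e2] teq_sym[OF e3]] a by simp
  next
    case b
    let ?x0 = "gsort (cinst P c) x"
    have v: "valid_term D (cinst P c) (x,[])" using valid_gen[OF c b(2)] .
    have ty0: "ttype D (cinst P c) (x,[]) = ?x0" by (simp add: ttype_def)
    have x0: "?x0 \<in> sorts D" using gsortP[OF c b(2)] .
    have vt: "valid_term E (cinst Q ?x0) t" "valid_term E (cinst Q ?x0) t'"
      using wfQ[OF x0] b by (auto simp: wf_inspres_def)
    have e1: "teq E (T2.I c) (tapp (\<Phi> c) (tens Q (x,[]) t)) (tens Q' (tapp (\<phi> c) (x,[])) (tapp (\<psi> ?x0) t))"
      using nat_tens[OF c v] vt ty0 by simp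
    have e3: "teq E (T2.I c) (tapp (\<Phi> c) (tens Q (x,[]) t')) (tens Q' (tapp (\<phi> c) (x,[])) (tapp (\<psi> ?x0) t'))"
      using nat_tens[OF c v] vt ty0 by simp
    have ps: "teq E (cinst Q' ?x0) (tapp (\<psi> ?x0) t) (tapp (\<psi> ?x0) t')" using psi_m[OF x0] b by (auto simp: inst_morph_def)
    have vf: "valid_term D (cinst P' c) (tapp (\<phi> c) (x,[]))" "ttype D (cinst P' c) (tapp (\<phi> c) (x,[])) = ?x0"
      using inst_morph_valid[OF phi_m[OF c] v] ty0 by auto
    have e2: "teq E (T2.I c) (tens Q' (tapp (\<phi> c) (x,[])) (tapp (\<psi> ?x0) t)) (tens Q' (tapp (\<phi> c) (x,[])) (tapp (\<psi> ?x0) t'))"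
      using T2.tens_teq2[OF c vf(1)] ps vf(2) by simp
    show ?thesis using teq_trans[OF teq_trans[OF e1 e2] teq_sym[OF e3]] b by simp
  qed
qed

end


context twotwo begin

lemma mu_natural: assumes c: "c \<in> sorts C" and X: "X \<in> pobj (prof_comp cC cD cE SP SQ) c e"
  shows "sem_curr_morph E (ccomp D E P' Q') (ccomp_morph P Q' \<phi> \<psi>) c e (mu D E P Q c e X)
    = mu D E P' Q' c e (prof_comp_nt cC cD cE (sem_curr C D P') (sem_curr D E Q') (sem_curr_morph D P' \<phi>) (sem_curr_morph E Q' \<psi>) c e X)"
proof -
  from X_E[OF c X] obtain s t where st: "valid_term D (cinst P c) s" "valid_term E (cinst Q (ttype D (cinst P c) s)) t"
    "ttype E (cinst Q (ttype D (cinst P c) s)) t = e"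
    "rep X = (ttype D (cinst P c) s, tclass D (cinst P c) s, tclass E (cinst Q (ttype D (cinst P c) s)) t)"
    "mu D E P Q c e X = tclass E (I c) (tens Q s t)" by metis
  let ?d = "ttype D (cinst P c) s"
  have d: "?d \<in> sorts D" using ttypeP[OF c st(1)] .
  have vw: "valid_term E (I c) (tens Q s t)" using tens_valid[OF c st(1,2)] by simp
  have r: "teq E (I c) (rep (tclass E (I c) (tens Q s t))) (tens Q s t)" using teq_sym[OF tclass_rep[OF vw]] .
  have "teq E (T2.I c) (tapp (\<Phi> c) (rep (tclass E (I c) (tens Q s t)))) (tapp (\<Phi> c) (tens Q s t))"
    using inst_morph_teq[OF wfE wf_I[OF c] Phi_morph[OF c] r] .
  then have L: "teq E (T2.I c) (tapp (\<Phi> c) (rep (tclass E (I c) (tens Q s t)))) (tens Q' (tapp (\<phi> c) s) (tapp (\<psi> ?d) t))"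
    using nat_tens[OF c st(1,2)] teq_trans by blast
  let ?s1 = "tapp (\<phi> c) (rep (tclass D (cinst P c) s))" and ?t1 = "tapp (\<psi> ?d) (rep (tclass E (cinst Q ?d) t))"
  have rs: "teq D (cinst P c) (rep (tclass D (cinst P c) s)) s" using teq_sym[OF tclass_rep[OF st(1)]] .
  have rt: "teq E (cinst Q ?d) (rep (tclass E (cinst Q ?d) t)) t" using teq_sym[OF tclass_rep[OF st(2)]] .
  have vrs: "valid_term D (cinst P c) (rep (tclass D (cinst P c) s))" "ttype D (cinst P c) (rep (tclass D (cinst P c) s)) = ?d"
    using teq_valid[OF wfD wfP[OF c] rs] by auto
  have vrt: "valid_term E (cinst Q ?d) (rep (tclass E (cinst Q ?d) t))" "ttype E (cinst Q ?d) (rep (tclass E (cinst Q ?d) t)) = e"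
    using teq_valid[OF wfE wfQ[OF d] rt] st(3) by auto
  have vs1: "valid_term D (cinst P' c) ?s1" "ttype D (cinst P' c) ?s1 = ?d" using inst_morph_valid[OF phi_m[OF c] vrs(1)] vrs(2) by auto
  have vt1: "valid_term E (cinst Q' ?d) ?t1" "ttype E (cinst Q' ?d) ?t1 = e" using inst_morph_valid[OF psi_m[OF d] vrt(1)] vrt(2) by auto
  have es: "teq D (cinst P' c) ?s1 (tapp (\<phi> c) s)" using inst_morph_teq[OF wfD wfP[OF c] phi_m[OF c] rs] .
  have et: "teq E (cinst Q' ?d) ?t1 (tapp (\<psi> ?d) t)" using inst_morph_teq[OF wfE wfQ[OF d] psi_m[OF d] rt] .
  have R1: "teq E (T2.I c) (tens Q' ?s1 ?t1) (tens Q' (tapp (\<phi> c) s) ?t1)"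
    using T2.tens_teq1[OF c es] vt1 vs1(2) by simp
  have vfs: "valid_term D (cinst P' c) (tapp (\<phi> c) s)" "ttype D (cinst P' c) (tapp (\<phi> c) s) = ?d"
    using inst_morph_valid[OF phi_m[OF c] st(1)] by auto
  have R2: "teq E (T2.I c) (tens Q' (tapp (\<phi> c) s) ?t1) (tens Q' (tapp (\<phi> c) s) (tapp (\<psi> ?d) t))"
    using T2.tens_teq2[OF c vfs(1)] et vfs(2) by simp
  have rhs: "prof_comp_nt cC cD cE (sem_curr C D P') (sem_curr D E Q') (sem_curr_morph D P' \<phi>) (sem_curr_morph E Q' \<psi>) c e X
     = T2.cls c e (ttype D (cinst P' c) ?s1, tclass D (cinst P' c) ?s1, tclass E (cinst Q' (ttype D (cinst P' c) ?s1)) ?t1)"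
    unfolding prof_comp_nt_def st(4) using vs1(2) by (simp add: sem_curr_morph_def)
  have "mu D E P' Q' c e (T2.cls c e (ttype D (cinst P' c) ?s1, tclass D (cinst P' c) ?s1, tclass E (cinst Q' (ttype D (cinst P' c) ?s1)) ?t1))
     = tclass E (T2.I c) (tens Q' ?s1 ?t1)"
    using T2.mu_class[OF c vs1(1), of ?t1] vs1(2) vt1 by simp
  then have "mu D E P' Q' c e (prof_comp_nt cC cD cE (sem_curr C D P') (sem_curr D E Q') (sem_curr_morph D P' \<phi>) (sem_curr_morph E Q' \<psi>) c e X)
     = tclass E (T2.I c) (tens Q' (tapp (\<phi> c) s) (tapp (\<psi> ?d) t))"
    using rhs tclass_eq[OF teq_trans[OF R1 R2]] by simp
  moreover have "sem_curr_morph E (ccomp D E P' Q') (ccomp_morph P Q' \<phi> \<psi>) c e (mu D E P Q c e X)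
     = tclass E (T2.I c) (tens Q' (tapp (\<phi> c) s) (tapp (\<psi> ?d) t))"
    unfolding st(5) sem_curr_morph_def using tclass_eq[OF L] .
  ultimately show ?thesis by simp
qed

end


context two begin

definition act where "act f h x = (case x of (b,p,q) \<Rightarrow> (b, pmor SP f (c_id cD b) p, pmor SQ (c_id cD b) h q))"

lemma act_Fm: assumes f: "f \<in> c_mor cC" and h: "h \<in> c_mor cE"
    and u: "u \<in> K (c_cod cC f) (c_dom cE h)"
  shows "act f h u \<in> K (c_dom cC f) (c_cod cE h)"
    and "Fm (c_dom cC f) (act f h u) = pmor SC f h (Fm (c_cod cC f) u)"
proof -
  from f obtain pf where pf: "valid_path C pf" "f = pclass C pf" by auto
  from h obtain ph where ph: "valid_path E ph" "h = pclass E ph" by auto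
  have fd: "c_dom cC f = fst pf" "c_cod cC f = ptgt C pf" using pf sem_cat_dom[OF wfC] sem_cat_cod[OF wfC] by auto
  have hd: "c_dom cE h = fst ph" "c_cod cE h = ptgt E ph" using ph sem_cat_dom[OF wfE] sem_cat_cod[OF wfE] by auto
  have sc: "fst pf \<in> sorts C" "ptgt C pf \<in> sorts C" using valid_path_sorts[OF wfC pf(1)] by auto
  let ?c = "ptgt C pf"
  obtain b S T where u3: "u = (b,S,T)" by (metis prod.collapse)
  from K_E[OF sc(2), of b S T "fst ph"] u u3 fd hd obtain s t where st: "valid_term D (cinst P ?c) s" "ttype D (cinst P ?c) s = b" "S = tclass D (cinst P ?c) s"
    "valid_term E (cinst Q b) t" "ttype E (cinst Q b) t = fst ph" "T = tclass E (cinst Q b) t" "b \<in> sorts D" by metis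
  have vb: "valid_path D (b, [])" using st(7) by (simp add: valid_path_def)
  let ?s' = "apply_path P (snd pf) s"
  have ps: "pmor SP f (c_id cD b) S = tclass D (cinst P (fst pf)) ?s'"
    "valid_term D (cinst P (fst pf)) ?s'" "ttype D (cinst P (fst pf)) ?s' = b"
    using pmor_sem[OF cpP pf(1) vb st(1)] pf(2) st(2,3) by auto
  let ?t' = "(fst t, snd t @ snd ph)"
  have pt: "pmor SQ (c_id cD b) h T = tclass E (cinst Q b) ?t'"
    "valid_term E (cinst Q b) ?t'" "ttype E (cinst Q b) ?t' = ptgt E ph"
    using pmor_sem[OF cpQ vb ph(1), of t] st(4,5,6) ph(2) by auto
  have au: "act f h u = (b, tclass D (cinst P (fst pf)) ?s', tclass E (cinst Q b) ?t')"
    unfolding act_def u3 using ps(1) pt(1) by simp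
  have K: "(b, tclass D (cinst P (fst pf)) ?s', tclass E (cinst Q b) ?t') \<in> K (fst pf) (ptgt E ph)"
    using K_I[OF sc(1) ps(2), of ?t'] ps(3) pt(2,3) by simp
  then show "act f h u \<in> K (c_dom cC f) (c_cod cE h)" unfolding au fd hd .
  have "Fm (c_dom cC f) (act f h u) = tclass E (I (fst pf)) (tens Q ?s' ?t')"
    unfolding au fd using F_cls[OF sc(1) ps(2), of ?t'] ps(3) pt(2) by simp
  moreover have "pmor SC f h (Fm (c_cod cC f) u) = tclass E (I (fst pf)) (tens Q ?s' ?t')"
  proof -
    have v: "valid_term E (I ?c) (tens Q s t)" "ttype E (I ?c) (tens Q s t) = fst ph" using tens_valid[OF sc(2) st(1)] st(2,4,5) by auto
    have Fu: "Fm (c_cod cC f) u = tclass E (I ?c) (tens Q s t)" unfolding fd u3 using F_cls[OF sc(2) st(1), of t] st by simp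
    have "pmor SC f h (tclass E (I ?c) (tens Q s t)) = tclass E (I (fst pf)) (fst (apply_path (ccomp D E P Q) (snd pf) (tens Q s t)), snd (apply_path (ccomp D E P Q) (snd pf) (tens Q s t)) @ snd ph)"
      using pmor_sem(1)[OF curr_pres_ccomp pf(1) ph(1) v(1) v(2)] pf(2) ph(2) by simp
    also have "\<dots> = tclass E (I (fst pf)) (tens Q ?s' ?t')" by (simp add: apply_path_ccomp tens_app2)
    finally show ?thesis using Fu by simp
  qed
  ultimately show "Fm (c_dom cC f) (act f h u) = pmor SC f h (Fm (c_cod cC f) u)" by simp
qed

lemma pmor_comp_cls: assumes f: "f \<in> c_mor cC" and h: "h \<in> c_mor cE"
    and u: "u \<in> K (c_cod cC f) (c_dom cE h)"
  shows "pmor (prof_comp cC cD cE SP SQ) f h (cls (c_cod cC f) (c_dom cE h) u) = cls (c_dom cC f) (c_cod cE h) (act f h u)"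
proof -
  have so: "c_dom cC f \<in> sorts C" "c_cod cC f \<in> sorts C" using sem_obj[OF wfC f] by auto
  let ?X = "cls (c_cod cC f) (c_dom cE h) u"
  have r: "rep ?X \<in> K (c_cod cC f) (c_dom cE h)" "equivclp (gen (c_cod cC f) (c_dom cE h)) u (rep ?X)"
    using rep_cls[OF u] by auto
  have pm: "pmor (prof_comp cC cD cE SP SQ) f h ?X = cls (c_dom cC f) (c_cod cE h) (act f h (rep ?X))"
    unfolding pmor_comp act_def by (simp add: case_prod_beta)
  have K1: "act f h u \<in> K (c_dom cC f) (c_cod cE h)" using act_Fm(1)[OF f h u] .
  have K2: "act f h (rep ?X) \<in> K (c_dom cC f) (c_cod cE h)" using act_Fm(1)[OF f h r(1)] .
  have "Fm (c_dom cC f) (act f h u) = Fm (c_dom cC f) (act f h (rep ?X))"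
    using act_Fm(2)[OF f h u] act_Fm(2)[OF f h r(1)] F_R[OF so(2) r(2)] by simp
  then have m: "mu D E P Q (c_dom cC f) (c_cod cE h) (cls (c_dom cC f) (c_cod cE h) (act f h u))
     = mu D E P Q (c_dom cC f) (c_cod cE h) (cls (c_dom cC f) (c_cod cE h) (act f h (rep ?X)))"
    using mu_cls[OF so(1) K1] mu_cls[OF so(1) K2] by simp
  have o1: "cls (c_dom cC f) (c_cod cE h) (act f h u) \<in> pobj (prof_comp cC cD cE SP SQ) (c_dom cC f) (c_cod cE h)"
    using K1 unfolding pobj_comp by blast
  have o2: "cls (c_dom cC f) (c_cod cE h) (act f h (rep ?X)) \<in> pobj (prof_comp cC cD cE SP SQ) (c_dom cC f) (c_cod cE h)"
    using K2 unfolding pobj_comp by blast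
  have "cls (c_dom cC f) (c_cod cE h) (act f h u) = cls (c_dom cC f) (c_cod cE h) (act f h (rep ?X))"
    using beta_mu[OF so(1) o1] beta_mu[OF so(1) o2] m by metis
  then show ?thesis using pm by simp
qed

lemma finite_ccomp: assumes "finite_curr C D P" "finite_curr D E Q" shows "finite_curr C E (ccomp D E P Q)"
  unfolding finite_curr_def
proof (intro conjI ballI)
  show "finite_catpres C" "finite_catpres E" using assms by (auto simp: finite_curr_def)
  fix c assume c: "c \<in> sorts C"
  have fP: "finite (gens (cinst P c))" "finite (ieqs (cinst P c))" using assms c by (auto simp: finite_curr_def finite_inspres_def)
  have fQ: "d \<in> sorts D \<Longrightarrow> finite (gens (cinst Q d)) \<and> finite (ieqs (cinst Q d))" for d
    using assms by (auto simp: finite_curr_def finite_inspres_def)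
  have g: "gens (I c) = Sigma (gens (cinst P c)) (\<lambda>x. gens (cinst Q (gsort (cinst P c) x)))"
    by (auto simp: ccomp_gens)
  have fg: "finite (gens (I c))" unfolding g using fP fQ gsortP[OF c] by (intro finite_SigmaI) auto
  have s1: "{(tens Q s (q, []), tens Q s' (q, [])) | s s' q.
       (s,s') \<in> ieqs (cinst P c) \<and> q \<in> gens (cinst Q (ttype D (cinst P c) s))}
     \<subseteq> (\<lambda>(ss,q). (tens Q (fst ss) (q, []), tens Q (snd ss) (q, []))) ` Sigma (ieqs (cinst P c)) (\<lambda>ss. gens (cinst Q (ttype D (cinst P c) (fst ss))))"
  proof
    fix z assume "z \<in> {(tens Q s (q, []), tens Q s' (q, [])) | s s' q.
       (s,s') \<in> ieqs (cinst P c) \<and> q \<in> gens (cinst Q (ttype D (cinst P c) s))}"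
    then obtain s s' q where z: "z = (tens Q s (q, []), tens Q s' (q, []))" "(s,s') \<in> ieqs (cinst P c)" "q \<in> gens (cinst Q (ttype D (cinst P c) s))" by blast
    show "z \<in> (\<lambda>(ss,q). (tens Q (fst ss) (q, []), tens Q (snd ss) (q, []))) ` Sigma (ieqs (cinst P c)) (\<lambda>ss. gens (cinst Q (ttype D (cinst P c) (fst ss))))"
      by (rule image_eqI[of _ _ "((s,s'),q)"]) (use z in auto)
  qed
  have f1: "finite (Sigma (ieqs (cinst P c)) (\<lambda>ss. gens (cinst Q (ttype D (cinst P c) (fst ss)))))"
  proof (intro finite_SigmaI fP(2))
    fix ss assume "ss \<in> ieqs (cinst P c)"
    then have "valid_term D (cinst P c) (fst ss)" using wfP[OF c] by (auto simp: wf_inspres_def)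
    then show "finite (gens (cinst Q (ttype D (cinst P c) (fst ss))))" using fQ ttypeP[OF c] by blast
  qed
  have s2: "{(tens Q (p, []) t, tens Q (p, []) t') | p t t'.
       p \<in> gens (cinst P c) \<and> (t,t') \<in> ieqs (cinst Q (gsort (cinst P c) p))}
     \<subseteq> (\<lambda>(p,tt). (tens Q (p, []) (fst tt), tens Q (p, []) (snd tt))) ` Sigma (gens (cinst P c)) (\<lambda>p. ieqs (cinst Q (gsort (cinst P c) p)))"
  proof
    fix z assume "z \<in> {(tens Q (p, []) t, tens Q (p, []) t') | p t t'.
       p \<in> gens (cinst P c) \<and> (t,t') \<in> ieqs (cinst Q (gsort (cinst P c) p))}"
    then obtain p t t' where z: "z = (tens Q (p, []) t, tens Q (p, []) t')" "p \<in> gens (cinst P c)" "(t,t') \<in> ieqs (cinst Q (gsort (cinst P c) p))" by blast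
    show "z \<in> (\<lambda>(p,tt). (tens Q (p, []) (fst tt), tens Q (p, []) (snd tt))) ` Sigma (gens (cinst P c)) (\<lambda>p. ieqs (cinst Q (gsort (cinst P c) p)))"
      by (rule image_eqI[of _ _ "(p,(t,t'))"]) (use z in auto)
  qed
  have f2: "finite (Sigma (gens (cinst P c)) (\<lambda>p. ieqs (cinst Q (gsort (cinst P c) p))))"
    using fP fQ gsortP[OF c] by (intro finite_SigmaI) auto
  have "finite (ieqs (I c))" unfolding ccomp_ieqs
    using finite_subset[OF s1 finite_imageI[OF f1]] finite_subset[OF s2 finite_imageI[OF f2]] by blast
  then show "finite_inspres (I c)" using fg by (simp add: finite_inspres_def)
qed

end


lemma sem_id: assumes "wf_catpres A" "a \<in> sorts A"
  shows "c_id (sem_cat A) a \<in> c_mor (sem_cat A)" "c_dom (sem_cat A) (c_id (sem_cat A) a) = a"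
    "c_cod (sem_cat A) (c_id (sem_cat A) a) = a"
proof -
  have v: "valid_path A (a,[])" using assms(2) by (simp add: valid_path_def)
  show "c_id (sem_cat A) a \<in> c_mor (sem_cat A)" using v by (simp only: sem_cat_simps) blast
  show "c_dom (sem_cat A) (c_id (sem_cat A) a) = a" using sem_cat_dom[OF assms(1) v] by simp
  show "c_cod (sem_cat A) (c_id (sem_cat A) a) = a" using sem_cat_cod[OF assms(1) v] by simp
qed

lemma sem_obj': "wf_catpres A \<Longrightarrow> f \<in> c_mor (sem_cat A) \<Longrightarrow> c_dom (sem_cat A) f \<in> c_obj (sem_cat A) \<and> c_cod (sem_cat A) f \<in> c_obj (sem_cat A)"
  using sem_cat_dom sem_cat_cod valid_path_sorts by fastforce

definition mpn where "mpn \<alpha> \<beta> a c x = (case x of (b,p,q) \<Rightarrow> (b, \<alpha> a b p, \<beta> b c q))"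

lemma gen_map:
  assumes wf: "wf_catpres C" "wf_catpres D" "wf_catpres E"
    and na: "is_nt (sem_cat C) (sem_cat D) P1 P2 \<alpha>" and nb: "is_nt (sem_cat D) (sem_cat E) Q1 Q2 \<beta>"
    and a: "a \<in> sorts C" and c: "c \<in> sorts E"
    and g: "coend_gen (sem_cat C) (sem_cat D) (sem_cat E) P1 Q1 a c x y"
  shows "coend_gen (sem_cat C) (sem_cat D) (sem_cat E) P2 Q2 a c (mpn \<alpha> \<beta> a c x) (mpn \<alpha> \<beta> a c y)"
proof -
  from g obtain G p q where G: "G \<in> c_mor (sem_cat D)" "p \<in> pobj P1 a (c_dom (sem_cat D) G)" "q \<in> pobj Q1 (c_cod (sem_cat D) G) c"
    "x = (c_dom (sem_cat D) G, p, pmor Q1 G (c_id (sem_cat E) c) q)" "y = (c_cod (sem_cat D) G, pmor P1 (c_id (sem_cat C) a) G p, q)"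
    unfolding coend_gen_def by blast
  note ia = sem_id[OF wf(1) a] and ic = sem_id[OF wf(3) c]
  have o: "c_dom (sem_cat D) G \<in> sorts D" "c_cod (sem_cat D) G \<in> sorts D" using sem_obj'[OF wf(2) G(1)] by auto
  have e1: "\<beta> (c_dom (sem_cat D) G) c (pmor Q1 G (c_id (sem_cat E) c) q) = pmor Q2 G (c_id (sem_cat E) c) (\<beta> (c_cod (sem_cat D) G) c q)"
    using nb G(1,3) ic unfolding is_nt_def by force
  have e2: "\<alpha> a (c_cod (sem_cat D) G) (pmor P1 (c_id (sem_cat C) a) G p) = pmor P2 (c_id (sem_cat C) a) G (\<alpha> a (c_dom (sem_cat D) G) p)"
    using na G(1,2) ia unfolding is_nt_def by force
  have p2: "\<alpha> a (c_dom (sem_cat D) G) p \<in> pobj P2 a (c_dom (sem_cat D) G)" using na a o G(2) unfolding is_nt_def by simp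
  have q2: "\<beta> (c_cod (sem_cat D) G) c q \<in> pobj Q2 (c_cod (sem_cat D) G) c" using nb c o G(3) unfolding is_nt_def by simp
  show ?thesis unfolding coend_gen_def
    by (rule bexI[OF _ G(1)], rule bexI[OF _ p2], rule bexI[OF _ q2]) (unfold G(4,5) mpn_def prod.case e1 e2, (rule conjI refl)+)
qed

lemma comp_nt_cls:
  assumes wf: "wf_catpres C" "wf_catpres D" "wf_catpres E"
    and na: "is_nt (sem_cat C) (sem_cat D) P1 P2 \<alpha>" and nb: "is_nt (sem_cat D) (sem_cat E) Q1 Q2 \<beta>"
    and a: "a \<in> sorts C" and c: "c \<in> sorts E"
    and u: "u \<in> coend_carrier (sem_cat D) P1 Q1 a c"
  shows "prof_comp_nt (sem_cat C) (sem_cat D) (sem_cat E) P2 Q2 \<alpha> \<beta> a c (coend_class (sem_cat C) (sem_cat D) (sem_cat E) P1 Q1 a c u)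
     = coend_class (sem_cat C) (sem_cat D) (sem_cat E) P2 Q2 a c (mpn \<alpha> \<beta> a c u)"
    and "mpn \<alpha> \<beta> a c u \<in> coend_carrier (sem_cat D) P2 Q2 a c"
proof -
  let ?X = "coend_class (sem_cat C) (sem_cat D) (sem_cat E) P1 Q1 a c u"
  have r: "equivclp (coend_gen (sem_cat C) (sem_cat D) (sem_cat E) P1 Q1 a c) u (rep ?X)" using rep_cls(2)[OF u] .
  have "equivclp (coend_gen (sem_cat C) (sem_cat D) (sem_cat E) P2 Q2 a c) (mpn \<alpha> \<beta> a c u) (mpn \<alpha> \<beta> a c (rep ?X))"
    by (rule equivclp_map[OF _ r]) (rule r_into_equivclp, rule gen_map[OF wf na nb a c])
  then have "coend_class (sem_cat C) (sem_cat D) (sem_cat E) P2 Q2 a c (mpn \<alpha> \<beta> a c (rep ?X))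
     = coend_class (sem_cat C) (sem_cat D) (sem_cat E) P2 Q2 a c (mpn \<alpha> \<beta> a c u)" using cls_eq by metis
  then show "prof_comp_nt (sem_cat C) (sem_cat D) (sem_cat E) P2 Q2 \<alpha> \<beta> a c ?X = coend_class (sem_cat C) (sem_cat D) (sem_cat E) P2 Q2 a c (mpn \<alpha> \<beta> a c u)"
    unfolding prof_comp_nt_def mpn_def by (simp add: case_prod_beta)
  obtain b p q where u3: "u = (b,p,q)" by (metis prod.collapse)
  have h: "b \<in> sorts D" "p \<in> pobj P1 a b" "q \<in> pobj Q1 b c" using u unfolding u3 carrier_mem by auto
  have "\<alpha> a b p \<in> pobj P2 a b" using na a h unfolding is_nt_def by simp
  moreover have "\<beta> b c q \<in> pobj Q2 b c" using nb c h unfolding is_nt_def by simp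
  ultimately show "mpn \<alpha> \<beta> a c u \<in> coend_carrier (sem_cat D) P2 Q2 a c"
    using h by (simp add: u3 mpn_def carrier_mem)
qed

lemma mpn_inv:
  assumes na: "is_nt (sem_cat C) (sem_cat D) P1 P2 \<alpha>" and nb: "is_nt (sem_cat D) (sem_cat E) Q1 Q2 \<beta>"
    and ia: "\<And>a b x. a \<in> sorts C \<Longrightarrow> b \<in> sorts D \<Longrightarrow> x \<in> pobj P1 a b \<Longrightarrow> \<alpha>' a b (\<alpha> a b x) = x"
    and ib: "\<And>a b x. a \<in> sorts D \<Longrightarrow> b \<in> sorts E \<Longrightarrow> x \<in> pobj Q1 a b \<Longrightarrow> \<beta>' a b (\<beta> a b x) = x"
    and a: "a \<in> sorts C" and c: "c \<in> sorts E" and u: "u \<in> coend_carrier (sem_cat D) P1 Q1 a c"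
  shows "mpn \<alpha>' \<beta>' a c (mpn \<alpha> \<beta> a c u) = u"
proof -
  obtain b p q where u3: "u = (b,p,q)" by (metis prod.collapse)
  show ?thesis using u ia ib a c unfolding u3 mpn_def carrier_mem by simp
qed

lemma is_nt_comp:
  assumes "is_nt A B P Q \<alpha>" "is_nt A B Q R \<beta>"
    and oA: "\<And>f. f \<in> c_mor A \<Longrightarrow> c_dom A f \<in> c_obj A \<and> c_cod A f \<in> c_obj A"
    and oB: "\<And>f. f \<in> c_mor B \<Longrightarrow> c_dom B f \<in> c_obj B \<and> c_cod B f \<in> c_obj B"
  shows "is_nt A B P R (\<lambda>a b x. \<beta> a b (\<alpha> a b x))"
  unfolding is_nt_def
proof (intro conjI ballI)
  fix a b x assume "a \<in> c_obj A" "b \<in> c_obj B" "x \<in> pobj P a b"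
  then show "\<beta> a b (\<alpha> a b x) \<in> pobj R a b" using assms(1,2) unfolding is_nt_def by blast
next
  fix f g x assume f: "f \<in> c_mor A" and g: "g \<in> c_mor B" and x: "x \<in> pobj P (c_cod A f) (c_dom B g)"
  have ax: "\<alpha> (c_cod A f) (c_dom B g) x \<in> pobj Q (c_cod A f) (c_dom B g)" using assms(1) oA[OF f] oB[OF g] x unfolding is_nt_def by blast
  show "\<beta> (c_dom A f) (c_cod B g) (\<alpha> (c_dom A f) (c_cod B g) (pmor P f g x)) = pmor R f g (\<beta> (c_cod A f) (c_dom B g) (\<alpha> (c_cod A f) (c_dom B g) x))"
    using assms(1,2) f g x ax unfolding is_nt_def by simp
qed

lemma iso_trans:
  assumes i1: "is_prof_iso A B P Q \<alpha>" and i2: "is_prof_iso A B Q R \<beta>"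
    and oA: "\<And>f. f \<in> c_mor A \<Longrightarrow> c_dom A f \<in> c_obj A \<and> c_cod A f \<in> c_obj A"
    and oB: "\<And>f. f \<in> c_mor B \<Longrightarrow> c_dom B f \<in> c_obj B \<and> c_cod B f \<in> c_obj B"
  shows "is_prof_iso A B P R (\<lambda>a b x. \<beta> a b (\<alpha> a b x))"
proof -
  from i1 obtain \<alpha>' where a: "is_nt A B P Q \<alpha>" "is_nt A B Q P \<alpha>'"
    "\<forall>a\<in>c_obj A. \<forall>b\<in>c_obj B. (\<forall>x\<in>pobj P a b. \<alpha>' a b (\<alpha> a b x) = x) \<and> (\<forall>y\<in>pobj Q a b. \<alpha> a b (\<alpha>' a b y) = y)"
    unfolding is_prof_iso_def by blast
  from i2 obtain \<beta>' where b: "is_nt A B Q R \<beta>" "is_nt A B R Q \<beta>'"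
    "\<forall>a\<in>c_obj A. \<forall>b\<in>c_obj B. (\<forall>x\<in>pobj Q a b. \<beta>' a b (\<beta> a b x) = x) \<and> (\<forall>y\<in>pobj R a b. \<beta> a b (\<beta>' a b y) = y)"
    unfolding is_prof_iso_def by blast
  show ?thesis unfolding is_prof_iso_def
  proof (intro conjI exI[of _ "\<lambda>a b y. \<alpha>' a b (\<beta>' a b y)"])
    show "is_nt A B P R (\<lambda>a b x. \<beta> a b (\<alpha> a b x))" by (rule is_nt_comp[OF a(1) b(1) oA oB])
    show "is_nt A B R P (\<lambda>a b y. \<alpha>' a b (\<beta>' a b y))" by (rule is_nt_comp[OF b(2) a(2) oA oB])
    show "\<forall>aa\<in>c_obj A. \<forall>ba\<in>c_obj B. (\<forall>x\<in>pobj P aa ba. \<alpha>' aa ba (\<beta>' aa ba (\<beta> aa ba (\<alpha> aa ba x))) = x) \<and> (\<forall>y\<in>pobj R aa ba. \<beta> aa ba (\<alpha> aa ba (\<alpha>' aa ba (\<beta>' aa ba y))) = y)"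
    proof (intro ballI conjI)
      fix aa ba x assume h: "aa \<in> c_obj A" "ba \<in> c_obj B" "x \<in> pobj P aa ba"
      have "\<alpha> aa ba x \<in> pobj Q aa ba" using a(1) h unfolding is_nt_def by blast
      then show "\<alpha>' aa ba (\<beta>' aa ba (\<beta> aa ba (\<alpha> aa ba x))) = x" using a(3) b(3) h by simp
    next
      fix aa ba y assume h: "aa \<in> c_obj A" "ba \<in> c_obj B" "y \<in> pobj R aa ba"
      have "\<beta>' aa ba y \<in> pobj Q aa ba" using b(2) h unfolding is_nt_def by blast
      then show "\<beta> aa ba (\<alpha> aa ba (\<alpha>' aa ba (\<beta>' aa ba y))) = y" using a(3) b(3) h by simp
    qed
  qed
qed



lemma is_nt_natD: "is_nt A B P P' \<alpha> \<Longrightarrow> f \<in> c_mor A \<Longrightarrow> g \<in> c_mor B \<Longrightarrow> x \<in> pobj P (c_cod A f) (c_dom B g) \<Longrightarrow>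
   \<alpha> (c_dom A f) (c_cod B g) (pmor P f g x) = pmor P' f g (\<alpha> (c_cod A f) (c_dom B g) x)"
  unfolding is_nt_def by blast

lemma is_profD: "is_prof A B P \<Longrightarrow> f \<in> c_mor A \<Longrightarrow> g \<in> c_mor B \<Longrightarrow> x \<in> pobj P (c_cod A f) (c_dom B g) \<Longrightarrow>
   pmor P f g x \<in> pobj P (c_dom A f) (c_cod B g)"
  unfolding is_prof_def by blast

context two begin

lemma gamma_iso:
  fixes PP :: "('c, ('c \<times> 'f list) set, 'd, ('d \<times> 'g list) set, 'v) prof"
    and QQ :: "('d, ('d \<times> 'g list) set, 'e, ('e \<times> 'h list) set, 'w) prof"
  assumes iPP: "is_prof cC cD PP" and iQQ: "is_prof cD cE QQ"
    and ia: "is_prof_iso cC cD PP SP \<alpha>" and ib: "is_prof_iso cD cE QQ SQ \<beta>"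
  shows "is_prof_iso cC cE (prof_comp cC cD cE PP QQ) (prof_comp cC cD cE SP SQ) (prof_comp_nt cC cD cE SP SQ \<alpha> \<beta>)"
proof -
  from ia obtain \<alpha>' where a: "is_nt cC cD PP SP \<alpha>" "is_nt cC cD SP PP \<alpha>'"
    "\<forall>a\<in>c_obj cC. \<forall>b\<in>c_obj cD. (\<forall>x\<in>pobj PP a b. \<alpha>' a b (\<alpha> a b x) = x) \<and> (\<forall>y\<in>pobj SP a b. \<alpha> a b (\<alpha>' a b y) = y)"
    unfolding is_prof_iso_def by blast
  from ib obtain \<beta>' where b: "is_nt cD cE QQ SQ \<beta>" "is_nt cD cE SQ QQ \<beta>'"
    "\<forall>a\<in>c_obj cD. \<forall>b\<in>c_obj cE. (\<forall>x\<in>pobj QQ a b. \<beta>' a b (\<beta> a b x) = x) \<and> (\<forall>y\<in>pobj SQ a b. \<beta> a b (\<beta>' a b y) = y)"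
    unfolding is_prof_iso_def by blast
  note wf3 = wfC wfD wfE
  let ?K1 = "coend_carrier cD PP QQ" and ?cls1 = "coend_class cC cD cE PP QQ"
  let ?C1 = "prof_comp cC cD cE PP QQ" and ?C2 = "prof_comp cC cD cE SP SQ"
  let ?act1 = "\<lambda>f h x. (case x of (b,p,q) \<Rightarrow> (b, pmor PP f (c_id cD b) p, pmor QQ (c_id cD b) h q))"
  have act1K: "?act1 f h u \<in> ?K1 (c_dom cC f) (c_cod cE h)" and act1m: "mpn \<alpha> \<beta> (c_dom cC f) (c_cod cE h) (?act1 f h u) = act f h (mpn \<alpha> \<beta> (c_cod cC f) (c_dom cE h) u)"
    if f: "f \<in> c_mor cC" and h: "h \<in> c_mor cE" and u: "u \<in> ?K1 (c_cod cC f) (c_dom cE h)" for f h u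
  proof -
    obtain b p q where u3: "u = (b,p,q)" by (metis prod.collapse)
    have hb: "b \<in> sorts D" "p \<in> pobj PP (c_cod cC f) b" "q \<in> pobj QQ b (c_dom cE h)" using u unfolding u3 carrier_mem by auto
    note idb = sem_id[OF wfD hb(1)]
    have p1: "pmor PP f (c_id cD b) p \<in> pobj PP (c_dom cC f) b" using is_profD[OF iPP f idb(1)] idb(2,3) hb by simp
    have q1: "pmor QQ (c_id cD b) h q \<in> pobj QQ b (c_cod cE h)" using is_profD[OF iQQ idb(1) h] idb(2,3) hb by simp
    show "?act1 f h u \<in> ?K1 (c_dom cC f) (c_cod cE h)" using p1 q1 hb by (simp add: u3 carrier_mem)
    have e1: "\<alpha> (c_dom cC f) b (pmor PP f (c_id cD b) p) = pmor SP f (c_id cD b) (\<alpha> (c_cod cC f) b p)"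
      using is_nt_natD[OF a(1) f idb(1)] idb(2,3) hb by simp
    have e2: "\<beta> b (c_cod cE h) (pmor QQ (c_id cD b) h q) = pmor SQ (c_id cD b) h (\<beta> b (c_dom cE h) q)"
      using is_nt_natD[OF b(1) idb(1) h] idb(2,3) hb by simp
    show "mpn \<alpha> \<beta> (c_dom cC f) (c_cod cE h) (?act1 f h u) = act f h (mpn \<alpha> \<beta> (c_cod cC f) (c_dom cE h) u)"
      unfolding u3 mpn_def act_def prod.case e1 e2 by (rule refl)
  qed
  have ob: "\<And>f. f \<in> c_mor cC \<Longrightarrow> c_dom cC f \<in> c_obj cC \<and> c_cod cC f \<in> c_obj cC" using sem_obj'[OF wfC] by blast
  have oe: "\<And>f. f \<in> c_mor cE \<Longrightarrow> c_dom cE f \<in> c_obj cE \<and> c_cod cE f \<in> c_obj cE" using sem_obj'[OF wfE] by blast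
  have Gobj: "prof_comp_nt cC cD cE SP SQ \<alpha> \<beta> a c X = cls a c (mpn \<alpha> \<beta> a c (rep X)) \<and> mpn \<alpha> \<beta> a c (rep X) \<in> K a c"
    if "a \<in> sorts C" "c \<in> sorts E" "X \<in> pobj ?C1 a c" for a c X
    using comp_nt_cls[OF wf3 a(1) b(1) that(1,2) pobj_comp_rep(1)[OF that(3)]] pobj_comp_rep(2)[OF that(3)] by metis
  show ?thesis
  proof (rule iso_intro[where \<beta> = "prof_comp_nt cC cD cE PP QQ \<alpha>' \<beta>'"])
    show "is_nt cC cE ?C1 ?C2 (prof_comp_nt cC cD cE SP SQ \<alpha> \<beta>)"
      unfolding is_nt_def
    proof (intro conjI ballI)
      fix a c X assume h: "a \<in> c_obj cC" "c \<in> c_obj cE" "X \<in> pobj ?C1 a c"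
      then have "prof_comp_nt cC cD cE SP SQ \<alpha> \<beta> a c X = cls a c (mpn \<alpha> \<beta> a c (rep X)) \<and> mpn \<alpha> \<beta> a c (rep X) \<in> K a c"
        using Gobj by simp
      then show "prof_comp_nt cC cD cE SP SQ \<alpha> \<beta> a c X \<in> pobj ?C2 a c" unfolding pobj_comp by blast
    next
      fix f h X assume f: "f \<in> c_mor cC" and h: "h \<in> c_mor cE" and X: "X \<in> pobj ?C1 (c_cod cC f) (c_dom cE h)"
      let ?u = "rep X"
      have u: "?u \<in> ?K1 (c_cod cC f) (c_dom cE h)" using pobj_comp_rep(1)[OF X] .
      have pm: "pmor ?C1 f h X = ?cls1 (c_dom cC f) (c_cod cE h) (?act1 f h ?u)"
        unfolding pmor_comp by (simp add: case_prod_beta)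
      have "prof_comp_nt cC cD cE SP SQ \<alpha> \<beta> (c_dom cC f) (c_cod cE h) (pmor ?C1 f h X)
         = cls (c_dom cC f) (c_cod cE h) (act f h (mpn \<alpha> \<beta> (c_cod cC f) (c_dom cE h) ?u))"
        unfolding pm using comp_nt_cls(1)[OF wf3 a(1) b(1) _ _ act1K[OF f h u]] act1m[OF f h u] ob[OF f] oe[OF h] by simp
      moreover have "pmor ?C2 f h (prof_comp_nt cC cD cE SP SQ \<alpha> \<beta> (c_cod cC f) (c_dom cE h) X)
         = cls (c_dom cC f) (c_cod cE h) (act f h (mpn \<alpha> \<beta> (c_cod cC f) (c_dom cE h) ?u))"
        using Gobj[of "c_cod cC f" "c_dom cE h" X] X ob[OF f] oe[OF h] pmor_comp_cls[OF f h] by simp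
      ultimately show "prof_comp_nt cC cD cE SP SQ \<alpha> \<beta> (c_dom cC f) (c_cod cE h) (pmor ?C1 f h X) =
          pmor ?C2 f h (prof_comp_nt cC cD cE SP SQ \<alpha> \<beta> (c_cod cC f) (c_dom cE h) X)" by simp
    qed
  next
    fix a c Y assume ac: "a \<in> c_obj cC" "c \<in> c_obj cE" and Y: "Y \<in> pobj ?C2 a c"
    show "prof_comp_nt cC cD cE PP QQ \<alpha>' \<beta>' a c Y \<in> pobj ?C1 a c"
      using comp_nt_cls[OF wf3 a(2) b(2) _ _ pobj_comp_rep(1)[OF Y]] pobj_comp_rep(2)[OF Y] ac unfolding pobj_comp by auto
  next
    fix a c X assume ac: "a \<in> c_obj cC" "c \<in> c_obj cE" and X: "X \<in> pobj ?C1 a c"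
    have u: "rep X \<in> ?K1 a c" using pobj_comp_rep(1)[OF X] .
    have g: "prof_comp_nt cC cD cE SP SQ \<alpha> \<beta> a c X = cls a c (mpn \<alpha> \<beta> a c (rep X))" "mpn \<alpha> \<beta> a c (rep X) \<in> K a c"
      using Gobj[of a c X] ac X by auto
    have "prof_comp_nt cC cD cE PP QQ \<alpha>' \<beta>' a c (cls a c (mpn \<alpha> \<beta> a c (rep X))) = ?cls1 a c (mpn \<alpha>' \<beta>' a c (mpn \<alpha> \<beta> a c (rep X)))"
      using comp_nt_cls(1)[OF wf3 a(2) b(2) _ _ g(2)] ac by simp
    also have "\<dots> = ?cls1 a c (rep X)" using mpn_inv[OF a(1) b(1) _ _ _ _ u] a(3) b(3) ac by simp
    also have "\<dots> = X" using pobj_comp_rep(2)[OF X] by simp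
    finally show "prof_comp_nt cC cD cE PP QQ \<alpha>' \<beta>' a c (prof_comp_nt cC cD cE SP SQ \<alpha> \<beta> a c X) = X" using g(1) by simp
  next
    fix a c Y assume ac: "a \<in> c_obj cC" "c \<in> c_obj cE" and Y: "Y \<in> pobj ?C2 a c"
    have u: "rep Y \<in> K a c" using pobj_comp_rep(1)[OF Y] .
    have g: "prof_comp_nt cC cD cE PP QQ \<alpha>' \<beta>' a c Y = ?cls1 a c (mpn \<alpha>' \<beta>' a c (rep Y))" "mpn \<alpha>' \<beta>' a c (rep Y) \<in> ?K1 a c"
      using comp_nt_cls[OF wf3 a(2) b(2) _ _ u] pobj_comp_rep(2)[OF Y] ac by auto
    have "prof_comp_nt cC cD cE SP SQ \<alpha> \<beta> a c (?cls1 a c (mpn \<alpha>' \<beta>' a c (rep Y))) = cls a c (mpn \<alpha> \<beta> a c (mpn \<alpha>' \<beta>' a c (rep Y)))"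
      using comp_nt_cls(1)[OF wf3 a(1) b(1) _ _ g(2)] ac by simp
    also have "\<dots> = cls a c (rep Y)" using mpn_inv[OF a(2) b(2) _ _ _ _ u] a(3) b(3) ac by simp
    also have "\<dots> = Y" using pobj_comp_rep(2)[OF Y] by simp
    finally show "prof_comp_nt cC cD cE SP SQ \<alpha> \<beta> a c (prof_comp_nt cC cD cE PP QQ \<alpha>' \<beta>' a c Y) = Y" using g(1) by simp
  next
    fix f h X assume f: "f \<in> c_mor cC" and h: "h \<in> c_mor cE" and X: "X \<in> pobj ?C1 (c_cod cC f) (c_dom cE h)"
    have pm: "pmor ?C1 f h X = ?cls1 (c_dom cC f) (c_cod cE h) (?act1 f h (rep X))"
      unfolding pmor_comp by (simp add: case_prod_beta)
    show "pmor ?C1 f h X \<in> pobj ?C1 (c_dom cC f) (c_cod cE h)"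
      unfolding pm pobj_comp using act1K[OF f h pobj_comp_rep(1)[OF X]] by blast
  next
    show "\<And>f. f \<in> c_mor cC \<Longrightarrow> c_dom cC f \<in> c_obj cC \<and> c_cod cC f \<in> c_obj cC" by (rule ob)
    show "\<And>f. f \<in> c_mor cE \<Longrightarrow> c_dom cE f \<in> c_obj cE \<and> c_cod cE f \<in> c_obj cE" by (rule oe)
  qed
qed

end


theorem mainTheorem10:
  fixes C :: "('c,'f) catpres" and D :: "('d,'g) catpres" and E :: "('e,'h) catpres"
    and P :: "('c,'f,'x,'d,'g) curr" and Q :: "('d,'g,'y,'e,'h) curr"
  assumes "wf_catpres C" and "wf_catpres D" and "wf_catpres E"
  shows
   "(curr_pres C D P \<and> curr_pres D E Q \<longrightarrow>
       is_prof_iso (sem_cat C) (sem_cat E)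
          (prof_comp (sem_cat C) (sem_cat D) (sem_cat E) (sem_curr C D P) (sem_curr D E Q))
          (sem_curr C E (ccomp D E P Q)) (mu D E P Q)
     \<and> (\<forall>c\<in>sorts C. \<forall>s t. valid_term D (cinst P c) s \<longrightarrow>
          valid_term E (cinst Q (ttype D (cinst P c) s)) t \<longrightarrow>
          mu D E P Q c (ttype E (cinst Q (ttype D (cinst P c) s)) t)
            (coend_class (sem_cat C) (sem_cat D) (sem_cat E) (sem_curr C D P) (sem_curr D E Q)
               c (ttype E (cinst Q (ttype D (cinst P c) s)) t)
               (ttype D (cinst P c) s, tclass D (cinst P c) s,
                tclass E (cinst Q (ttype D (cinst P c) s)) t))
          = tclass E (cinst (ccomp D E P Q) c) (tens Q s t))
     \<and> (\<forall>(P' :: ('c,'f,'x2,'d,'g) curr) (Q' :: ('d,'g,'y2,'e,'h) curr) \<phi> \<psi>.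
          curr_pres C D P' \<longrightarrow> curr_pres D E Q' \<longrightarrow>
          curr_morph C D P P' \<phi> \<longrightarrow> curr_morph D E Q Q' \<psi> \<longrightarrow>
          (\<forall>c\<in>sorts C. \<forall>e\<in>sorts E.
             \<forall>X\<in>pobj (prof_comp (sem_cat C) (sem_cat D) (sem_cat E) (sem_curr C D P) (sem_curr D E Q)) c e.
               sem_curr_morph E (ccomp D E P' Q') (ccomp_morph P Q' \<phi> \<psi>) c e (mu D E P Q c e X)
               = mu D E P' Q' c e
                   (prof_comp_nt (sem_cat C) (sem_cat D) (sem_cat E) (sem_curr C D P') (sem_curr D E Q')
                      (sem_curr_morph D P' \<phi>) (sem_curr_morph E Q' \<psi>) c e X)))
     \<and> (finite_curr C D P \<and> finite_curr D E Q \<longrightarrow> finite_curr C E (ccomp D E P Q)))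
    \<and> (\<forall>(PP :: ('c, ('c \<times> 'f list) set, 'd, ('d \<times> 'g list) set, 'v) prof)
         (QQ :: ('d, ('d \<times> 'g list) set, 'e, ('e \<times> 'h list) set, 'w) prof).
         is_prof (sem_cat C) (sem_cat D) PP \<longrightarrow> is_prof (sem_cat D) (sem_cat E) QQ \<longrightarrow>
         fcp TYPE('x) C D PP \<longrightarrow> fcp TYPE('y) D E QQ \<longrightarrow>
         fcp TYPE('x \<times> 'y) C E (prof_comp (sem_cat C) (sem_cat D) (sem_cat E) PP QQ))"
proof (rule conjI, rule impI, intro conjI)
  assume cp: "curr_pres C D P \<and> curr_pres D E Q"
  interpret T: two C D E P Q using cp by unfold_locales auto
  show "is_prof_iso (sem_cat C) (sem_cat E)
          (prof_comp (sem_cat C) (sem_cat D) (sem_cat E) (sem_curr C D P) (sem_curr D E Q))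
          (sem_curr C E (ccomp D E P Q)) (mu D E P Q)" by (rule T.mu_iso)
  show "\<forall>c\<in>sorts C. \<forall>s t. valid_term D (cinst P c) s \<longrightarrow>
          valid_term E (cinst Q (ttype D (cinst P c) s)) t \<longrightarrow>
          mu D E P Q c (ttype E (cinst Q (ttype D (cinst P c) s)) t)
            (coend_class (sem_cat C) (sem_cat D) (sem_cat E) (sem_curr C D P) (sem_curr D E Q)
               c (ttype E (cinst Q (ttype D (cinst P c) s)) t)
               (ttype D (cinst P c) s, tclass D (cinst P c) s,
                tclass E (cinst Q (ttype D (cinst P c) s)) t))
          = tclass E (cinst (ccomp D E P Q) c) (tens Q s t)"
    using T.mu_class by blast
  show "finite_curr C D P \<and> finite_curr D E Q \<longrightarrow> finite_curr C E (ccomp D E P Q)"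
    using T.finite_ccomp by blast
  show "\<forall>(P' :: ('c,'f,'x2,'d,'g) curr) (Q' :: ('d,'g,'y2,'e,'h) curr) \<phi> \<psi>.
          curr_pres C D P' \<longrightarrow> curr_pres D E Q' \<longrightarrow>
          curr_morph C D P P' \<phi> \<longrightarrow> curr_morph D E Q Q' \<psi> \<longrightarrow>
          (\<forall>c\<in>sorts C. \<forall>e\<in>sorts E.
             \<forall>X\<in>pobj (prof_comp (sem_cat C) (sem_cat D) (sem_cat E) (sem_curr C D P) (sem_curr D E Q)) c e.
               sem_curr_morph E (ccomp D E P' Q') (ccomp_morph P Q' \<phi> \<psi>) c e (mu D E P Q c e X)
               = mu D E P' Q' c e
                   (prof_comp_nt (sem_cat C) (sem_cat D) (sem_cat E) (sem_curr C D P') (sem_curr D E Q')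
                      (sem_curr_morph D P' \<phi>) (sem_curr_morph E Q' \<psi>) c e X))"
  proof (intro allI impI ballI)
    fix P' :: "('c,'f,'x2,'d,'g) curr" and Q' :: "('d,'g,'y2,'e,'h) curr" and \<phi> \<psi> c e X
    assume h: "curr_pres C D P'" "curr_pres D E Q'" "curr_morph C D P P' \<phi>" "curr_morph D E Q Q' \<psi>"
      "c \<in> sorts C" "e \<in> sorts E"
      "X \<in> pobj (prof_comp (sem_cat C) (sem_cat D) (sem_cat E) (sem_curr C D P) (sem_curr D E Q)) c e"
    interpret TT: twotwo C D E P Q P' Q' \<phi> \<psi> using cp h by unfold_locales auto
    show "sem_curr_morph E (ccomp D E P' Q') (ccomp_morph P Q' \<phi> \<psi>) c e (mu D E P Q c e X)
               = mu D E P' Q' c e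
                   (prof_comp_nt (sem_cat C) (sem_cat D) (sem_cat E) (sem_curr C D P') (sem_curr D E Q')
                      (sem_curr_morph D P' \<phi>) (sem_curr_morph E Q' \<psi>) c e X)"
      using TT.mu_natural[OF h(5) h(7)] .
  qed
next
  show "\<forall>(PP :: ('c, ('c \<times> 'f list) set, 'd, ('d \<times> 'g list) set, 'v) prof)
         (QQ :: ('d, ('d \<times> 'g list) set, 'e, ('e \<times> 'h list) set, 'w) prof).
         is_prof (sem_cat C) (sem_cat D) PP \<longrightarrow> is_prof (sem_cat D) (sem_cat E) QQ \<longrightarrow>
         fcp TYPE('x) C D PP \<longrightarrow> fcp TYPE('y) D E QQ \<longrightarrow>
         fcp TYPE('x \<times> 'y) C E (prof_comp (sem_cat C) (sem_cat D) (sem_cat E) PP QQ)"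
  proof (intro allI impI)
  fix PP :: "('c, ('c \<times> 'f list) set, 'd, ('d \<times> 'g list) set, 'v) prof"
    and QQ :: "('d, ('d \<times> 'g list) set, 'e, ('e \<times> 'h list) set, 'w) prof"
  assume h: "is_prof (sem_cat C) (sem_cat D) PP" "is_prof (sem_cat D) (sem_cat E) QQ"
    "fcp TYPE('x) C D PP" "fcp TYPE('y) D E QQ"
  from h(3) obtain P0 :: "('c,'f,'x,'d,'g) curr" where p0: "curr_pres C D P0" "finite_curr C D P0"
    "prof_isomorphic (sem_cat C) (sem_cat D) PP (sem_curr C D P0)" unfolding fcp_def by blast
  from h(4) obtain Q0 :: "('d,'g,'y,'e,'h) curr" where q0: "curr_pres D E Q0" "finite_curr D E Q0"
    "prof_isomorphic (sem_cat D) (sem_cat E) QQ (sem_curr D E Q0)" unfolding fcp_def by blast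
  interpret T: two C D E P0 Q0 using p0 q0 by unfold_locales auto
  from p0(3) obtain \<alpha> where a: "is_prof_iso (sem_cat C) (sem_cat D) PP (sem_curr C D P0) \<alpha>" unfolding prof_isomorphic_def by blast
  from q0(3) obtain \<beta> where b: "is_prof_iso (sem_cat D) (sem_cat E) QQ (sem_curr D E Q0) \<beta>" unfolding prof_isomorphic_def by blast
  have g: "is_prof_iso (sem_cat C) (sem_cat E) (prof_comp (sem_cat C) (sem_cat D) (sem_cat E) PP QQ)
      (prof_comp (sem_cat C) (sem_cat D) (sem_cat E) (sem_curr C D P0) (sem_curr D E Q0))
      (prof_comp_nt (sem_cat C) (sem_cat D) (sem_cat E) (sem_curr C D P0) (sem_curr D E Q0) \<alpha> \<beta>)"
    using T.gamma_iso[OF h(1) h(2) a b] .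
  have "is_prof_iso (sem_cat C) (sem_cat E) (prof_comp (sem_cat C) (sem_cat D) (sem_cat E) PP QQ)
      (sem_curr C E (ccomp D E P0 Q0))
      (\<lambda>a b x. mu D E P0 Q0 a b (prof_comp_nt (sem_cat C) (sem_cat D) (sem_cat E) (sem_curr C D P0) (sem_curr D E Q0) \<alpha> \<beta> a b x))"
    by (rule iso_trans[OF g T.mu_iso]) (use sem_obj'[OF T.wfC] sem_obj'[OF T.wfE] in blast)+
  then have "prof_isomorphic (sem_cat C) (sem_cat E) (prof_comp (sem_cat C) (sem_cat D) (sem_cat E) PP QQ)
      (sem_curr C E (ccomp D E P0 Q0))" unfolding prof_isomorphic_def by blast
  moreover have "curr_pres C E (ccomp D E P0 Q0)" by (rule T.curr_pres_ccomp)
  moreover have "finite_curr C E (ccomp D E P0 Q0)" using T.finite_ccomp p0(2) q0(2) by blast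
  ultimately show "fcp TYPE('x \<times> 'y) C E (prof_comp (sem_cat C) (sem_cat D) (sem_cat E) PP QQ)"
    unfolding fcp_def by blast
  qed
qed


end
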